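(* Let $X$ be a tree of bounded valence, $p$ a transition kernel on $X_0$ with $(X_0,p)$ irreducible and $k\ge0$ with $d(x,y)>k\Rightarrow p(x,y)=0$. For any distinct $x,y\in X_0$ with geodesic $[x,y]=(x_0,\dots,x_m)$, any $a\in\mathcal{B}(x)\setminus\mathcal{B}(y)$, $b\in\mathcal{B}(y)$, and any complex $z$ of sufficiently small modulus, $$G_z(a,b;\mathcal{B}(y)^\complement)=\sum_{\substack{(c_0,\dots,c_l)\in\Xi_{[x,y]}\\ c_0=a,\ c_l=b}}\ \prod_{j=1}^lG_z\big(c_{j-1},c_j;\mathcal{B}(x_{i_j})^\complement\big),$$ where $(i_1,\dots,i_l)$ are the crossing indices of $(c_0,\dots,c_l)$; the sum is finite.
   Context: $\mathcal{B}(w)=\{v:d(w,v)\le k\}$, $\partial\mathcal{B}(w)=\{v:d(w,v)=k+1\}$. $p^{(n)}(a,b;\Omega)=\sum p(\omega_0,\omega_1)\cdots p(\omega_{n-1},\omega_n)$ over sequences from $a$ to $b$ with $\omega_1,\dots,\omega_{n-1}\in\Omega$ ($p^{(0)}(a,b;\Omega)=\delta_a(b)$), and $G_z(a,b;\Omega)=\sum_np^{(n)}(a,b;\Omega)z^n$. $\Xi_w=\{(a,b)\in\partial\mathcal{B}(w)\times\mathcal{B}(w):\exists n,\,p^{(n)}(a,b;\mathcal{B}(w)^\complement)>0\}$. $\Xi_{[x,y]}$ is the set of tuples $(c_0,\dots,c_l)$, $0<l\le m$, for which there are integers $0<i_1<\dots<i_l\le m$ with $c_0\in\mathcal{B}(x)\cap\partial\mathcal{B}(x_{i_1})$,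 $c_j\in\mathcal{B}(x_{i_j})\cap\partial\mathcal{B}(x_{i_{j+1}})$ ($1\le j\le l-1$), $c_l\in\mathcal{B}(x_{i_l})\cap\mathcal{B}(y)$ and $(c_{j-1},c_j)\in\Xi_{x_{i_j}}$ for all $j$. These indices (crossing indices) are uniquely given by $i_s=1+\max\{i:c_{s-1}\in\mathcal{B}(x_i)\}$. *)

theory Defs
  imports "HOL-Analysis.Analysis"
begin

section \<open>Trees (vertex set = the whole type 'a, edges given by E)\<close>

definition is_walk :: "('a \<Rightarrow> 'a \<Rightarrow> bool) \<Rightarrow> 'a list \<Rightarrow> bool" where
  "is_walk E ws \<longleftrightarrow> ws \<noteq> [] \<and> (\<forall>i. Suc i < length ws \<longrightarrow> E (ws ! i) (ws ! Suc i))"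

definition is_tree :: "('a \<Rightarrow> 'a \<Rightarrow> bool) \<Rightarrow> bool" where
  "is_tree E \<longleftrightarrow>
     (\<forall>u v. E u v \<longrightarrow> E v u) \<and> (\<forall>u. \<not> E u u) \<and>
     (\<forall>u v. \<exists>ws. is_walk E ws \<and> hd ws = u \<and> last ws = v) \<and>
     \<not> (\<exists>cs. length cs \<ge> 3 \<and> distinct cs \<and> is_walk E cs \<and> E (last cs) (hd cs))"

definition bounded_valence :: "('a \<Rightarrow> 'a \<Rightarrow> bool) \<Rightarrow> bool" where
  "bounded_valence E \<longleftrightarrow> (\<exists>D::nat. \<forall>v. finite {w. E v w} \<and> card {w. E v w} \<le> D)"

definition gdist :: "('a \<Rightarrow> 'a \<Rightarrow> bool) \<Rightarrow> 'a \<Rightarrow> 'a \<Rightarrow> nat" where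
  "gdist E u v = (LEAST n. \<exists>ws. is_walk E ws \<and> length ws = Suc n \<and> hd ws = u \<and> last ws = v)"

definition is_geodesic :: "('a \<Rightarrow> 'a \<Rightarrow> bool) \<Rightarrow> 'a \<Rightarrow> 'a \<Rightarrow> 'a list \<Rightarrow> bool" where
  "is_geodesic E x y xs \<longleftrightarrow> is_walk E xs \<and> hd xs = x \<and> last xs = y \<and>
     length xs = Suc (gdist E x y)"

definition ball_k :: "('a \<Rightarrow> 'a \<Rightarrow> bool) \<Rightarrow> nat \<Rightarrow> 'a \<Rightarrow> 'a set" where
  "ball_k E k w = {v. gdist E w v \<le> k}"

definition sphere_k :: "('a \<Rightarrow> 'a \<Rightarrow> bool) \<Rightarrow> nat \<Rightarrow> 'a \<Rightarrow> 'a set" where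
  "sphere_k E k w = {v. gdist E w v = Suc k}"

definition pres :: "('a \<Rightarrow> 'a \<Rightarrow> real) \<Rightarrow> 'a set \<Rightarrow> nat \<Rightarrow> 'a \<Rightarrow> 'a \<Rightarrow> real" where
  "pres p \<Omega> n a b =
     (\<Sum>\<^sub>\<infinity> ws \<in> {ws. length ws = Suc n \<and> ws ! 0 = a \<and> ws ! n = b \<and>
                     (\<forall>i. 0 < i \<and> i < n \<longrightarrow> ws ! i \<in> \<Omega>)}.
        \<Prod>i<n. p (ws ! i) (ws ! Suc i))"

definition green :: "('a \<Rightarrow> 'a \<Rightarrow> real) \<Rightarrow> complex \<Rightarrow> 'a \<Rightarrow> 'a \<Rightarrow> 'a set \<Rightarrow> complex" where
  "green p z a b \<Omega> = (\<Sum>n. complex_of_real (pres p \<Omega> n a b) * z ^ n)"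

definition Xi_w :: "('a \<Rightarrow> 'a \<Rightarrow> bool) \<Rightarrow> nat \<Rightarrow> ('a \<Rightarrow> 'a \<Rightarrow> real) \<Rightarrow> 'a \<Rightarrow> ('a \<times> 'a) set" where
  "Xi_w E k p w = {(a, b). a \<in> sphere_k E k w \<and> b \<in> ball_k E k w \<and>
                          (\<exists>n. pres p (- ball_k E k w) n a b > 0)}"

text \<open>Xi_[x,y] for the geodesic xs = (x_0,...,x_m); a tuple (c_0,...,c_l) is a list of length l+1;
  the indices i_1,...,i_l are the list is ! 0, ..., is ! (l-1).\<close>
definition Xi_geo :: "('a \<Rightarrow> 'a \<Rightarrow> bool) \<Rightarrow> nat \<Rightarrow> ('a \<Rightarrow> 'a \<Rightarrow> real) \<Rightarrow> 'a list \<Rightarrow> 'a list set" where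
  "Xi_geo E k p xs = {cs. let l = length cs - 1; m = length xs - 1 in
     0 < l \<and> l \<le> m \<and>
     (\<exists>is. length is = l \<and> sorted_wrt (<) is \<and> 0 < is ! 0 \<and> is ! (l - 1) \<le> m \<and>
        cs ! 0 \<in> ball_k E k (xs ! 0) \<inter> sphere_k E k (xs ! (is ! 0)) \<and>
        (\<forall>j. 1 \<le> j \<and> j \<le> l - 1 \<longrightarrow>
             cs ! j \<in> ball_k E k (xs ! (is ! (j - 1))) \<inter> sphere_k E k (xs ! (is ! j))) \<and>
        cs ! l \<in> ball_k E k (xs ! (is ! (l - 1))) \<inter> ball_k E k (xs ! m) \<and>
        (\<forall>j. 1 \<le> j \<and> j \<le> l \<longrightarrow> (cs ! (j - 1), cs ! j) \<in> Xi_w E k p (xs ! (is ! (j - 1)))))}"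

definition cross_idx :: "('a \<Rightarrow> 'a \<Rightarrow> bool) \<Rightarrow> nat \<Rightarrow> 'a list \<Rightarrow> 'a list \<Rightarrow> nat \<Rightarrow> nat" where
  "cross_idx E k xs cs s = Suc (Max {i. i < length xs \<and> cs ! (s - 1) \<in> ball_k E k (xs ! i)})"

end

theory Submission
  imports Defs
begin


lemma walk_iff: "is_walk E ws \<longleftrightarrow> ws \<noteq> [] \<and> successively E ws"
  by (simp add: is_walk_def successively_conv_nth)

lemma succ_take: "successively P xs \<Longrightarrow> successively P (take n xs)"
  by (metis append_take_drop_id successively_append_iff)
lemma succ_drop: "successively P xs \<Longrightarrow> successively P (drop n xs)"
  by (metis append_take_drop_id successively_append_iff)

definition nb :: "'a list \<Rightarrow> bool" where
  "nb ws \<longleftrightarrow> (\<forall>i. Suc (Suc i) < length ws \<longrightarrow> ws ! i \<noteq> ws ! Suc (Suc i))"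

lemma nb_Cons: "nb (x # ys) \<longleftrightarrow> nb ys \<and> (2 \<le> length ys \<longrightarrow> x \<noteq> ys ! 1)"
  unfolding nb_def
proof (intro iffI conjI impI allI)
  assume h: "\<forall>i. Suc (Suc i) < length (x # ys) \<longrightarrow> (x # ys) ! i \<noteq> (x # ys) ! Suc (Suc i)"
  fix i assume "Suc (Suc i) < length ys"
  then show "ys ! i \<noteq> ys ! Suc (Suc i)" using h[rule_format, of "Suc i"] by simp
next
  assume h: "\<forall>i. Suc (Suc i) < length (x # ys) \<longrightarrow> (x # ys) ! i \<noteq> (x # ys) ! Suc (Suc i)"
    and "2 \<le> length ys"
  then show "x \<noteq> ys ! 1" using h[rule_format, of 0] by simp
next
  fix i assume h: "(\<forall>i. Suc (Suc i) < length ys \<longrightarrow> ys ! i \<noteq> ys ! Suc (Suc i)) \<and> (2 \<le> length ys \<longrightarrow> x \<noteq> ys ! 1)"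
    and i: "Suc (Suc i) < length (x # ys)"
  show "(x # ys) ! i \<noteq> (x # ys) ! Suc (Suc i)"
  proof (cases i)
    case 0 then show ?thesis using h i by simp
  next
    case (Suc j) then show ?thesis using h i by simp
  qed
qed

lemma nb_rev: "nb (rev ws) \<longleftrightarrow> nb ws"
proof -
  have "nb ws \<Longrightarrow> nb (rev ws)" for ws :: "'a list"
    unfolding nb_def
  proof (intro allI impI)
    fix i assume h: "\<forall>i. Suc (Suc i) < length ws \<longrightarrow> ws ! i \<noteq> ws ! Suc (Suc i)"
      and i: "Suc (Suc i) < length (rev ws)"
    have "ws ! (length ws - 1 - Suc (Suc i)) \<noteq> ws ! Suc (Suc (length ws - 1 - Suc (Suc i)))"
      using h i by auto
    moreover have "Suc (Suc (length ws - 1 - Suc (Suc i))) = length ws - 1 - i" using i by auto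
    ultimately show "rev ws ! i \<noteq> rev ws ! Suc (Suc i)" using i by (auto simp: rev_nth)
  qed
  from this[of ws] this[of "rev ws"] show ?thesis by auto
qed

lemma nb_snoc: "nb (xs @ [y]) \<longleftrightarrow> nb xs \<and> (2 \<le> length xs \<longrightarrow> xs ! (length xs - 2) \<noteq> y)"
proof -
  have "nb (xs @ [y]) = nb (y # rev xs)" by (metis nb_rev rev.simps(2) rev_rev_ident)
  also have "\<dots> \<longleftrightarrow> nb xs \<and> (2 \<le> length xs \<longrightarrow> xs ! (length xs - 2) \<noteq> y)"
    by (auto simp: nb_Cons nb_rev rev_nth numeral_2_eq_2)
  finally show ?thesis .
qed

lemma nb_take: "nb xs \<Longrightarrow> nb (take n xs)"
  unfolding nb_def by auto
lemma nb_drop: "nb xs \<Longrightarrow> nb (drop n xs)"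
  unfolding nb_def by auto

lemma nb_app: assumes "nb (xs @ [y])" "nb (x # ys)" "xs \<noteq> []" "ys \<noteq> []" "last xs = x" "hd ys = y"
  shows "nb (xs @ ys)"
  unfolding nb_def
proof (intro allI impI)
  fix i assume i: "Suc (Suc i) < length (xs @ ys)"
  let ?n = "length xs"
  have A: "\<And>i. Suc (Suc i) < length (xs@[y]) \<Longrightarrow> (xs@[y]) ! i \<noteq> (xs@[y]) ! Suc (Suc i)"
    using assms(1) unfolding nb_def by blast
  have B: "\<And>i. Suc (Suc i) < length (x#ys) \<Longrightarrow> (x#ys) ! i \<noteq> (x#ys) ! Suc (Suc i)"
    using assms(2) unfolding nb_def by blast
  consider "Suc (Suc i) < ?n" | "Suc (Suc i) = ?n" | "Suc i = ?n" | "i \<ge> ?n" by linarith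
  then show "(xs @ ys) ! i \<noteq> (xs @ ys) ! Suc (Suc i)"
  proof cases
    case 1 then show ?thesis using A[of i] by (auto simp: nth_append)
  next
    case 2 then show ?thesis using A[of i] assms(4,6) by (auto simp: nth_append hd_conv_nth)
  next
    case 3
    have "i = length xs - 1" using 3 by simp
    then have "(xs@ys) ! i = x" using 3 assms(3,5) by (auto simp: nth_append last_conv_nth)
    moreover have "(xs@ys) ! Suc (Suc i) = ys ! 1" using 3 by (auto simp: nth_append)
    ultimately show ?thesis using B[of 0] 3 i by auto
  next
    case 4
    have "(xs@ys) ! i = (x#ys) ! Suc (i - ?n)" using 4 by (auto simp: nth_append)
    moreover have "(xs@ys) ! Suc (Suc i) = (x#ys) ! Suc (Suc (Suc (i - ?n)))"
      using 4 by (auto simp: nth_append Suc_diff_le)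
    ultimately show ?thesis using B[of "Suc (i - ?n)"] 4 i by auto
  qed
qed

locale tree =
  fixes E :: "'a \<Rightarrow> 'a \<Rightarrow> bool"
  assumes tree: "is_tree E"
begin

abbreviation d where "d \<equiv> gdist E"

lemma sym: "E u v \<Longrightarrow> E v u" using tree unfolding is_tree_def by blast
lemma irrefl: "\<not> E u u" using tree unfolding is_tree_def by blast
lemma conn: "\<exists>ws. is_walk E ws \<and> hd ws = u \<and> last ws = v" using tree unfolding is_tree_def by blast
lemma nocycle: "\<not> (length cs \<ge> 3 \<and> distinct cs \<and> is_walk E cs \<and> E (last cs) (hd cs))"
  using tree unfolding is_tree_def by blast

lemma gd_ex: "\<exists>ws. is_walk E ws \<and> length ws = Suc (d u v) \<and> hd ws = u \<and> last ws = v"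
proof -
  obtain ws where ws: "is_walk E ws" "hd ws = u" "last ws = v" using conn by blast
  then have "\<exists>n ws. is_walk E ws \<and> length ws = Suc n \<and> hd ws = u \<and> last ws = v"
    by (metis Suc_pred is_walk_def length_greater_0_conv)
  then show ?thesis unfolding gdist_def by (rule LeastI_ex)
qed

lemma gd_le: "is_walk E ws \<Longrightarrow> hd ws = u \<Longrightarrow> last ws = v \<Longrightarrow> d u v < length ws"
proof -
  assume ws: "is_walk E ws" "hd ws = u" "last ws = v"
  then have "length ws = Suc (length ws - 1)" by (simp add: is_walk_def)
  then have "d u v \<le> length ws - 1" unfolding gdist_def using ws
    by (intro Least_le) blast
  then show ?thesis using ws by (cases ws) (auto simp: is_walk_def)
qed

lemma walk_rev: "is_walk E ws \<Longrightarrow> is_walk E (rev ws)"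
  unfolding walk_iff successively_rev
  by (auto elim!: successively_mono intro: sym)

lemma d_sym: "d u v = d v u"
proof -
  have "d v u \<le> d u v" for u v
  proof -
    obtain ws where "is_walk E ws" "length ws = Suc (d u v)" "hd ws = u" "last ws = v" using gd_ex by blast
    then have "d v u < length (rev ws)"
      by (intro gd_le walk_rev) (auto simp: hd_rev last_rev)
    then show ?thesis using \<open>length ws = _\<close> by simp
  qed
  then show ?thesis by (meson antisym)
qed

lemma d_refl[simp]: "d u u = 0"
  using gd_le[of "[u]" u u] by (simp add: is_walk_def)

lemma d_zero: "d u v = 0 \<Longrightarrow> u = v"
  using gd_ex[of u v] by (auto simp: length_Suc_conv)

lemma walk_join: "is_walk E xs \<Longrightarrow> is_walk E ys \<Longrightarrow> last xs = hd ys \<Longrightarrow> is_walk E (xs @ tl ys)"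
  unfolding walk_iff
proof (elim conjE, intro conjI)
  assume xs: "xs \<noteq> []" "successively E xs" and ys: "ys \<noteq> []" "successively E ys" and l: "last xs = hd ys"
  show "xs @ tl ys \<noteq> []" using xs by simp
  have ys': "ys = hd ys # tl ys" using ys by simp
  have "successively E (tl ys)" using ys(2) by (cases ys) (auto simp: successively_Cons)
  moreover have "tl ys \<noteq> [] \<Longrightarrow> E (hd ys) (hd (tl ys))"
    using ys(2) ys' by (metis list.collapse successively_Cons)
  ultimately show "successively E (xs @ tl ys)" using xs l by (auto simp: successively_append_iff)
qed

lemma d_tri: "d u w \<le> d u v + d v w"
proof -
  obtain xs where xs: "is_walk E xs" "length xs = Suc (d u v)" "hd xs = u" "last xs = v" using gd_ex by blast
  obtain ys where ys: "is_walk E ys" "length ys = Suc (d v w)" "hd ys = v" "last ys = w" using gd_ex by blast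
  have w: "is_walk E (xs @ tl ys)" using xs ys walk_join[of xs ys] by simp
  have l: "last (xs @ tl ys) = w"
  proof (cases "tl ys = []")
    case True
    then have "ys = [hd ys]" using ys(1) unfolding is_walk_def by (metis list.collapse)
    then show ?thesis using True xs ys by (metis append_Nil2 last_ConsL)
  next
    case False then show ?thesis using ys by (simp add: last_tl)
  qed
  have "d u w < length (xs @ tl ys)"
    by (rule gd_le[OF w _ l]) (use xs in \<open>auto simp: is_walk_def\<close>)
  then show ?thesis using xs ys by simp
qed

lemma d_edge: "E u v \<Longrightarrow> d u v = 1"
proof -
  assume e: "E u v"
  have "d u v < length [u,v]" by (rule gd_le) (auto simp: is_walk_def e less_Suc_eq)
  moreover have "u \<noteq> v" using e irrefl by auto
  ultimately show ?thesis using d_zero[of u v] by (auto simp: less_Suc_eq)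
qed

lemma walk_take: "is_walk E ws \<Longrightarrow> 0 < n \<Longrightarrow> is_walk E (take n ws)"
  unfolding walk_iff by (auto simp: succ_take)
lemma walk_drop: "is_walk E ws \<Longrightarrow> n < length ws \<Longrightarrow> is_walk E (drop n ws)"
  unfolding walk_iff by (auto simp: succ_drop)

end


lemma distinct_hd_last: "distinct Q \<Longrightarrow> 2 \<le> length Q \<Longrightarrow> hd Q \<noteq> last Q"
  by (cases Q) (auto simp: last_conv_nth nth_eq_iff_index_eq)

context tree begin

lemma hd_take': "0 < n \<Longrightarrow> hd (take n ws) = hd ws" by (cases ws; cases n) auto
lemma last_take': "0 < n \<Longrightarrow> n \<le> length ws \<Longrightarrow> last (take n ws) = ws ! (n - 1)"
  by (subst last_conv_nth) auto
lemma hd_drop': "n < length ws \<Longrightarrow> hd (drop n ws) = ws ! n" by (simp add: hd_drop_conv_nth)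
lemma last_drop': "n < length ws \<Longrightarrow> last (drop n ws) = last ws" by simp

lemma walk_edge: "is_walk E ws \<Longrightarrow> Suc i < length ws \<Longrightarrow> E (ws ! i) (ws ! Suc i)"
  unfolding is_walk_def by blast

lemma shortest_nb:
  assumes w: "is_walk E ws" and l: "length ws = Suc (d (hd ws) (last ws))"
  shows "nb ws"
  unfolding nb_def
proof (intro allI impI notI)
  fix i assume i: "Suc (Suc i) < length ws" and eq: "ws ! i = ws ! Suc (Suc i)"
  let ?a = "take (Suc i) ws" and ?b = "drop (Suc (Suc (Suc i))) ws"
  have s: "successively E ws" using w by (simp add: walk_iff)
  have "successively E (?a @ ?b)"
  proof (cases "?b = []")
    case True then show ?thesis using s succ_take by auto
  next
    case False
    then have i3: "Suc (Suc (Suc i)) < length ws" by simp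
    have "E (ws ! Suc (Suc i)) (ws ! Suc (Suc (Suc i)))" using walk_edge[OF w i3] .
    then have "E (last ?a) (hd ?b)" using i3 eq by (simp add: last_take' hd_drop')
    then show ?thesis using s succ_take succ_drop False by (auto simp: successively_append_iff)
  qed
  moreover have "ws \<noteq> []" using w by (simp add: is_walk_def)
  ultimately have w2: "is_walk E (?a @ ?b)" by (simp add: walk_iff)
  have "?a \<noteq> []" using i by auto
  then have h2: "hd (?a @ ?b) = hd ws" by (simp add: hd_take')
  have l2: "last (?a @ ?b) = last ws"
  proof (cases "?b = []")
    case True
    then have "length ws = Suc (Suc (Suc i))" using i by simp
    moreover have "last ws = ws ! Suc (Suc i)" using calculation by (subst last_conv_nth) auto
    ultimately show ?thesis using True eq i by (simp add: last_take')
  next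
    case False then show ?thesis by simp
  qed
  have "d (hd ws) (last ws) < length (?a @ ?b)" using gd_le[OF w2 h2 l2] .
  then show False using l i by simp
qed

lemma nb_distinct:
  assumes w: "is_walk E ws" and n: "nb ws"
  shows "distinct ws"
proof (rule ccontr)
  assume "\<not> distinct ws"
  then have ex: "\<exists>g i j. i < j \<and> j < length ws \<and> ws ! i = ws ! j \<and> j - i = g"
    by (auto simp: distinct_conv_nth) (metis linorder_neqE_nat)
  define g where "g = (LEAST g. \<exists>i j. i < j \<and> j < length ws \<and> ws ! i = ws ! j \<and> j - i = g)"
  obtain i j where ij: "i < j" "j < length ws" "ws ! i = ws ! j" "j - i = g"
    using LeastI_ex[OF ex] unfolding g_def[symmetric] by blast
  have minimal: "\<And>i' j'. i' < j' \<Longrightarrow> j' < length ws \<Longrightarrow> ws ! i' = ws ! j' \<Longrightarrow> g \<le> j' - i'"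
    unfolding g_def by (rule Least_le) blast
  define cs where "cs = take (j - i) (drop i ws)"
  have lc: "length cs = j - i" using ij unfolding cs_def by simp
  have cn: "\<And>q. q < j - i \<Longrightarrow> cs ! q = ws ! (i + q)" unfolding cs_def using ij by simp
  have dc: "distinct cs"
    unfolding distinct_conv_nth
  proof (intro allI impI)
    have H: "\<And>p q. p < q \<Longrightarrow> q < j - i \<Longrightarrow> ws ! (i+p) = ws ! (i+q) \<Longrightarrow> False"
    proof -
      fix p q assume "p < q" "q < j - i" "ws ! (i+p) = ws ! (i+q)"
      then have "g \<le> (i+q) - (i+p)" using ij by (intro minimal) auto
      then show False using \<open>p < q\<close> \<open>q < j - i\<close> ij by simp
    qed
    fix p q assume "p < length cs" "q < length cs" "p \<noteq> q"
    then show "cs ! p \<noteq> cs ! q" using H[of p q] H[of q p] lc cn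
      by (cases "p < q") auto
  qed
  have wc: "is_walk E cs" unfolding cs_def using ij w by (intro walk_take walk_drop) auto
  have hc: "hd cs = ws ! j" using ij cn[of 0] lc by (cases cs) auto
  have "cs \<noteq> []" using lc ij by auto
  then have "last cs = cs ! (j - i - 1)" using lc by (simp add: last_conv_nth)
  also have "\<dots> = ws ! (i + (j - i - 1))" using cn ij by simp
  also have "i + (j - i - 1) = j - 1" using ij by simp
  finally have lcs: "last cs = ws ! (j - 1)" .
  have e: "E (ws ! (j - 1)) (ws ! j)" using walk_edge[OF w, of "j - 1"] ij by simp
  consider "j - i = 1" | "j - i = 2" | "j - i \<ge> 3" using ij by linarith
  then show False
  proof cases
    case 1 then have "j - 1 = i" using ij by simp
    then show ?thesis using e ij irrefl by simp
  next
    case 2 then have "j = Suc (Suc i)" by simp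
    then show ?thesis using n ij unfolding nb_def by auto
  next
    case 3 then show ?thesis using nocycle[of cs] dc wc lc hc lcs e by simp
  qed
qed

lemma nb_unique:
  "is_walk E W \<Longrightarrow> is_walk E Q \<Longrightarrow> nb W \<Longrightarrow> nb Q \<Longrightarrow> hd W = hd Q \<Longrightarrow> last W = last Q \<Longrightarrow> W = Q"
proof (induction W arbitrary: Q)
  case Nil then show ?case by (simp add: is_walk_def)
next
  case (Cons u W')
  obtain Q' where Q: "Q = u # Q'" using Cons.prems by (cases Q) (auto simp: is_walk_def)
  have dQ: "distinct Q" using nb_distinct Cons.prems by blast
  have dW: "distinct (u # W')" using nb_distinct Cons.prems by blast
  show ?case
  proof (cases "W' = []")
    case True
    then have "hd Q = last Q" using Cons.prems by simp
    then have "length Q < 2" using distinct_hd_last[OF dQ] by linarith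
    then show ?thesis using Q True by simp
  next
    case W'ne: False
    show ?thesis
    proof (cases "Q' = []")
      case True
      then have "hd (u # W') = last (u # W')" using Cons.prems Q by simp
      then have "length (u # W') < 2" using distinct_hd_last[OF dW] by linarith
      then show ?thesis using W'ne by simp
    next
      case Q'ne: False
      have sW: "successively E (u # W')" and sQ: "successively E (u # Q')"
        using Cons.prems Q by (auto simp: walk_iff)
      have wW': "is_walk E W'" using sW W'ne by (cases W') (auto simp: walk_iff)
      have wQ': "is_walk E Q'" using sQ Q'ne by (cases Q') (auto simp: walk_iff)
      have nW': "nb W'" and nQ': "nb Q'" using Cons.prems Q by (auto simp: nb_Cons)
      show ?thesis
      proof (cases "hd W' = hd Q'")
        case True
        have "W' = Q'" using Cons.IH[OF wW' wQ' nW' nQ' True] Cons.prems Q W'ne Q'ne by simp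
        then show ?thesis using Q by simp
      next
        case False
        define R where "R = rev (u # W') @ Q'"
        have eu: "E u (hd Q')" using sQ Q'ne by (cases Q') auto
        have s1: "successively E (rev (u # W'))" using walk_rev[OF Cons.prems(1)] unfolding walk_iff by blast
        have s2: "successively E Q'" using wQ' walk_iff by blast
        have "successively E R" unfolding R_def successively_append_iff using s1 s2 eu by simp
        then have wR: "is_walk E R" unfolding R_def walk_iff by simp
        have "nb (hd Q' # u # W')" using Cons.prems(3) False W'ne
          by (auto simp: nb_Cons hd_conv_nth)
        then have n1: "nb (rev (u # W') @ [hd Q'])"
          by (metis nb_rev rev.simps(2) rev_rev_ident)
        have nR: "nb R" unfolding R_def
          by (rule nb_app[OF n1 _ _ Q'ne]) (use Cons.prems(4) Q in auto)
        have "distinct R" using nb_distinct[OF wR nR] .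
        moreover have "2 \<le> length R" unfolding R_def using Q'ne by (cases Q') auto
        moreover have "hd R = last R"
        proof -
          have "hd R = hd (rev (u # W'))" unfolding R_def by (rule hd_append2) simp
          also have "\<dots> = last (u # W')" by (rule hd_rev)
          also have "\<dots> = last Q" using Cons.prems by simp
          also have "\<dots> = last R" unfolding R_def using Q Q'ne by simp
          finally show ?thesis .
        qed
        ultimately show ?thesis using distinct_hd_last by blast
      qed
    qed
  qed
qed

lemma nb_geo: assumes "is_walk E W" "nb W" shows "length W = Suc (d (hd W) (last W))"
proof -
  obtain P where P: "is_walk E P" "length P = Suc (d (hd W) (last W))" "hd P = hd W" "last P = last W"
    using gd_ex by blast
  have "nb P" using shortest_nb[of P] P by simp
  then have "P = W" using nb_unique P assms by blast
  then show ?thesis using P by simp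
qed

lemma TL: assumes e: "E s t" shows "d u t = Suc (d u s) \<or> d u s = Suc (d u t)"
proof -
  obtain P where P: "is_walk E P" "length P = Suc (d u s)" "hd P = u" "last P = s" using gd_ex by blast
  have nP: "nb P" using shortest_nb[of P] P by simp
  show ?thesis
  proof (cases "2 \<le> length P \<and> P ! (length P - 2) = t")
    case True
    let ?B = "take (length P - 1) P"
    have "is_walk E ?B" using P True by (intro walk_take) auto
    moreover have "nb ?B" using nP by (rule nb_take)
    ultimately have "length ?B = Suc (d (hd ?B) (last ?B))" by (rule nb_geo)
    moreover have "hd ?B = u" using True P by (simp add: hd_take')
    moreover have "last ?B = t" using True by (simp add: last_take' numeral_2_eq_2)
    ultimately show ?thesis using P True by simp
  next
    case False
    have "is_walk E (P @ [t])" using P e by (auto simp: walk_iff successively_append_iff)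
    moreover have "nb (P @ [t])" using nP False by (simp add: nb_snoc)
    ultimately have "length (P @ [t]) = Suc (d (hd (P @ [t])) (last (P @ [t])))" by (rule nb_geo)
    then show ?thesis using P by (simp add: walk_iff)
  qed
qed

lemma TL2:
  assumes e: "E s t" and e2: "E w w'" and A: "d w s < d w t" and nA: "d w' t < d w' s"
  shows "w = s \<and> w' = t"
proof (rule ccontr)
  assume contra: "\<not> (w = s \<and> w' = t)"
  obtain P where P: "is_walk E P" "length P = Suc (d w' t)" "hd P = w'" "last P = t" using gd_ex by blast
  have nP: "nb P" using shortest_nb[of P] P by simp
  have notS: "\<not> (2 \<le> length P \<and> P ! (length P - 2) = s)"
  proof
    assume h: "2 \<le> length P \<and> P ! (length P - 2) = s"
    let ?B = "take (length P - 1) P"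
    have "is_walk E ?B" using P h by (intro walk_take) auto
    moreover have "hd ?B = w'" using h P by (simp add: hd_take')
    moreover have "last ?B = s" using h by (simp add: last_take' numeral_2_eq_2)
    ultimately have "d w' s < length ?B" by (rule gd_le)
    then show False using nA P by simp
  qed
  have wPs: "is_walk E (P @ [s])" using P sym[OF e] by (auto simp: walk_iff successively_append_iff)
  have nPs: "nb (P @ [s])" using nP notS by (simp add: nb_snoc)
  have sP: "successively E P" using P by (simp add: walk_iff)
  have Pne: "P \<noteq> []" using P(1) by (simp add: is_walk_def)
  show False
  proof (cases "length P = 1")
    case True
    then obtain z where z: "P = [z]" by (cases P) auto
    then have Pt: "P = [t]" "w' = t" using P by auto
    then have "w \<noteq> s" using contra by blast
    let ?R = "[w, t, s]"
    have "is_walk E ?R" using e2 Pt sym[OF e] by (simp add: walk_iff)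
    moreover have "nb ?R" using \<open>w \<noteq> s\<close> by (simp add: nb_Cons nb_def)
    ultimately have "length ?R = Suc (d (hd ?R) (last ?R))" by (rule nb_geo)
    then have "d w s = 2" by simp
    moreover have "d w t = 1" using d_edge e2 Pt by simp
    ultimately show False using A by simp
  next
    case False
    then have lP: "2 \<le> length P" using P by simp
    show False
    proof (cases "P ! 1 = w")
      case False
      let ?R = "w # (P @ [s])"
      have "hd (P @ [s]) = w'" using P Pne by simp
      then have "is_walk E ?R" using wPs e2 by (simp add: walk_iff successively_Cons)
      moreover have "(P @ [s]) ! 1 = P ! 1" using lP by (simp add: nth_append)
      then have "nb ?R" using nPs False by (simp add: nb_Cons)
      ultimately have "length ?R = Suc (d (hd ?R) (last ?R))" using nb_geo by blast
      then have "d w s = d w' t + 2" using P by simp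
      moreover have "d w t \<le> d w w' + d w' t" by (rule d_tri)
      moreover have "d w w' = 1" using d_edge e2 by simp
      ultimately show False using A by simp
    next
      case True
      let ?R = "drop 1 (P @ [s])"
      have "1 < length (P @ [s])" using Pne by simp
      then have "is_walk E ?R" using walk_drop[OF wPs] by blast
      moreover have "nb ?R" using nPs by (rule nb_drop)
      ultimately have lenR: "length ?R = Suc (d (hd ?R) (last ?R))" by (rule nb_geo)
      have hdR: "hd ?R = w"
      proof -
        have "hd ?R = (P @ [s]) ! 1" using \<open>1 < length (P @ [s])\<close> by (rule hd_drop')
        also have "\<dots> = P ! 1" using lP by (simp add: nth_append)
        finally show ?thesis using True by simp
      qed
      have lastR: "last ?R = s" using \<open>1 < length (P @ [s])\<close> last_drop' by (metis last_snoc)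
      have "length ?R = Suc (d w s)" by (simp only: lenR hdR lastR)
      moreover have "length ?R = length P" by simp
      ultimately have ds: "d w s = d w' t" using P(2) by simp
      have "1 < length P" using lP by simp
      then have "is_walk E (drop 1 P)" using P(1) walk_drop by blast
      moreover have "hd (drop 1 P) = w" using True hd_drop'[OF \<open>1 < length P\<close>] by simp
      moreover have "last (drop 1 P) = t" using P(4) last_drop'[OF \<open>1 < length P\<close>] by simp
      ultimately have "d w t < length (drop 1 P)" by (rule gd_le)
      then show False using ds A P by simp
    qed
  qed
qed

lemma cut:
  assumes e: "E s t" and A: "d u s < d u t" and nA: "d v t < d v s"
  shows "d u t + d t v \<le> d u v"
proof -
  obtain P where P: "is_walk E P" "length P = Suc (d u v)" "hd P = u" "last P = v" using gd_ex by blast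
  define A where "A i \<longleftrightarrow> d (P ! i) s < d (P ! i) t" for i
  have Pne: "P \<noteq> []" using P by (simp add: walk_iff)
  have "P ! 0 = u" using P(3) Pne by (simp add: hd_conv_nth)
  then have A0: "A 0" using A unfolding A_def by simp
  have "P ! (length P - 1) = v" using P(4) Pne by (simp add: last_conv_nth)
  then have An: "\<not> A (length P - 1)" using nA unfolding A_def by simp
  have "\<exists>i. Suc i < length P \<and> A i \<and> \<not> A (Suc i)"
  proof (rule ccontr)
    assume "\<not> ?thesis"
    then have "\<forall>i. Suc i < length P \<longrightarrow> A i \<longrightarrow> A (Suc i)" by blast
    then have "i < length P \<Longrightarrow> A i" for i using A0 by (induction i) auto
    then show False using An P by simp
  qed
  then obtain i where i: "Suc i < length P" "A i" "\<not> A (Suc i)" by blast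
  have ee: "E (P ! i) (P ! Suc i)" using walk_edge[OF P(1) i(1)] .
  have "d (P ! Suc i) t < d (P ! Suc i) s" using i(3) TL[OF e, of "P ! Suc i"] unfolding A_def by auto
  then have Pt: "P ! Suc i = t" using TL2[OF e ee] i(2) unfolding A_def by blast
  have "is_walk E (take (Suc (Suc i)) P)" using P by (intro walk_take) auto
  moreover have "hd (take (Suc (Suc i)) P) = u" using P by (simp add: hd_take')
  moreover have "last (take (Suc (Suc i)) P) = t" using Pt i by (simp add: last_take')
  ultimately have "d u t < length (take (Suc (Suc i)) P)" by (rule gd_le)
  then have d1: "d u t < Suc (Suc i)" using i by simp
  have "is_walk E (drop (Suc i) P)" using P i by (intro walk_drop) auto
  moreover have "hd (drop (Suc i) P) = t" using Pt i by (simp add: hd_drop')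
  moreover have "last (drop (Suc i) P) = v" using P i by simp
  ultimately have d2: "d t v < length P - Suc i" using gd_le[of "drop (Suc i) P" t v] by simp
  show ?thesis using d1 d2 P by simp
qed

end


context tree begin

lemma sub_walk_d:
  assumes w: "is_walk E ws" and ij: "i \<le> j" "j < length ws"
  shows "d (ws ! i) (ws ! j) \<le> j - i"
proof -
  let ?S = "take (Suc j - i) (drop i ws)"
  have "is_walk E ?S" using w ij by (intro walk_take walk_drop) auto
  moreover have "hd ?S = ws ! i" using ij by (simp add: hd_take' hd_drop')
  moreover have "last ?S = ws ! j" using ij by (simp add: last_take')
  ultimately have "d (ws ! i) (ws ! j) < length ?S" by (rule gd_le)
  then show ?thesis using ij by simp
qed

lemma finite_ball:
  assumes bv: "bounded_valence E"
  shows "finite {v. d u v \<le> r}"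
proof (induction r arbitrary: u)
  case 0
  have "{v. d u v \<le> 0} = {u}" using d_zero by auto
  then show ?case by simp
next
  case (Suc r)
  have fn: "finite {w. E u w}" using bv unfolding bounded_valence_def by blast
  have "{v. d u v \<le> Suc r} \<subseteq> {u} \<union> (\<Union>w\<in>{w. E u w}. {v. d w v \<le> r})"
  proof
    fix v assume v: "v \<in> {v. d u v \<le> Suc r}"
    show "v \<in> {u} \<union> (\<Union>w\<in>{w. E u w}. {v. d w v \<le> r})"
    proof (cases "d u v")
      case 0 then show ?thesis using d_zero by auto
    next
      case (Suc n)
      obtain P where P: "is_walk E P" "length P = Suc (d u v)" "hd P = u" "last P = v" using gd_ex by blast
      have l: "1 < length P" using P Suc by simp
      have "E (P ! 0) (P ! 1)" using walk_edge[OF P(1)] l by simp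
      moreover have "P ! 0 = u" using P(3) l by (cases P) auto
      ultimately have e: "E u (P ! 1)" by simp
      have "is_walk E (drop 1 P)" using walk_drop[OF P(1) l] .
      moreover have "hd (drop 1 P) = P ! 1" using hd_drop'[OF l] .
      moreover have "last (drop 1 P) = v" using last_drop'[OF l] P(4) by simp
      ultimately have "d (P ! 1) v < length (drop 1 P)" by (rule gd_le)
      then have "d (P ! 1) v \<le> r" using P Suc v by simp
      then show ?thesis using e by blast
    qed
  qed
  moreover have "finite ({u} \<union> (\<Union>w\<in>{w. E u w}. {v. d w v \<le> r}))"
    using fn Suc.IH by (intro finite_UnI finite_UN_I) auto
  ultimately show ?case by (rule finite_subset)
qed

end

locale geo = tree +
  fixes xs :: "'a list" and x y :: 'a and k :: nat
  assumes geo: "is_geodesic E x y xs"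
begin

definition m where "m = length xs - 1"
abbreviation B where "B w \<equiv> ball_k E k w"

lemma xs_walk: "is_walk E xs" using geo by (simp add: is_geodesic_def)
lemma len_xs: "length xs = Suc m" and m_d: "m = d x y"
  using geo unfolding is_geodesic_def m_def by auto
lemma xs0: "xs ! 0 = x"
proof -
  have "xs \<noteq> []" using len_xs by auto
  then show ?thesis using geo unfolding is_geodesic_def by (simp add: hd_conv_nth)
qed
lemma xsm: "xs ! m = y" using geo len_xs unfolding is_geodesic_def
  by (metis diff_Suc_1 last_conv_nth length_0_conv nat.distinct(1) m_def)

lemma xs_edge: "i < m \<Longrightarrow> E (xs ! i) (xs ! Suc i)"
  using walk_edge[OF xs_walk] len_xs by simp

lemma xs_dist: assumes "i \<le> j" "j \<le> m" shows "d (xs ! i) (xs ! j) = j - i"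
proof -
  have a: "d (xs ! i) (xs ! j) \<le> j - i" using sub_walk_d[OF xs_walk] assms len_xs by simp
  have b: "d x (xs ! i) \<le> i" using sub_walk_d[OF xs_walk, of 0 i] assms len_xs xs0 by simp
  have c: "d (xs ! j) y \<le> m - j" using sub_walk_d[OF xs_walk, of j m] assms len_xs xsm by simp
  have "m \<le> d x (xs ! i) + d (xs ! i) (xs ! j) + d (xs ! j) y"
    using m_d d_tri[of x y "xs ! i"] d_tri[of "xs ! i" y "xs ! j"] by simp
  then show ?thesis using a b c assms by simp
qed

definition inc where "inc c i \<longleftrightarrow> d c (xs ! (i - 1)) < d c (xs ! i)"

lemma step: assumes "0 < i" "i \<le> m"
  shows "(inc c i \<and> d c (xs ! i) = Suc (d c (xs ! (i - 1)))) \<or>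
         (\<not> inc c i \<and> d c (xs ! (i - 1)) = Suc (d c (xs ! i)))"
proof -
  have "E (xs ! (i - 1)) (xs ! i)" using xs_edge[of "i - 1"] assms by simp
  from TL[OF this, of c] show ?thesis unfolding inc_def by auto
qed

lemma inc_next: assumes "inc c i" "0 < i" "i < m" shows "inc c (Suc i)"
proof -
  have e: "E (xs ! (i - 1)) (xs ! i)" using xs_edge[of "i - 1"] assms by simp
  have "d (xs ! Suc i) (xs ! i) < d (xs ! Suc i) (xs ! (i - 1))"
    using xs_dist[of i "Suc i"] xs_dist[of "i - 1" "Suc i"] assms d_sym by simp
  from cut[OF e _ this] assms(1) have "d c (xs ! i) + d (xs ! i) (xs ! Suc i) \<le> d c (xs ! Suc i)"
    unfolding inc_def by blast
  moreover have "d (xs ! i) (xs ! Suc i) = 1" using xs_dist[of i "Suc i"] assms by simp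
  ultimately show ?thesis unfolding inc_def by simp
qed

lemma inc_after: assumes "inc c i" "0 < i" "i \<le> j" "j \<le> m"
  shows "inc c j \<and> d c (xs ! j) = d c (xs ! i) + (j - i)"
  using assms(3,4)
proof (induction j)
  case 0 then show ?case using assms by simp
next
  case (Suc j)
  show ?case
  proof (cases "i = Suc j")
    case True then show ?thesis using assms by simp
  next
    case False
    then have ij: "i \<le> j" using Suc by simp
    then have IH: "inc c j \<and> d c (xs ! j) = d c (xs ! i) + (j - i)" using Suc by simp
    have "inc c (Suc j)" using inc_next[of c j] IH ij assms Suc by simp
    moreover have "d c (xs ! Suc j) = Suc (d c (xs ! j))" using step[of "Suc j" c] Suc calculation by auto
    ultimately show ?thesis using IH ij by simp
  qed
qed

lemma dec_ge: assumes "\<not> inc c i" "0 < i" "i \<le> m" "j \<le> i"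
  shows "d c (xs ! i) \<le> d c (xs ! j)"
  using assms(4)
proof (induction "i - j" arbitrary: j)
  case 0 then show ?case by simp
next
  case (Suc n)
  then have j: "j < i" by simp
  have IH: "d c (xs ! i) \<le> d c (xs ! Suc j)" using Suc j by simp
  have "\<not> inc c (Suc j)"
  proof
    assume "inc c (Suc j)"
    then have "inc c i" using inc_after[of c "Suc j" i] j assms by simp
    then show False using assms by simp
  qed
  then have "d c (xs ! j) = Suc (d c (xs ! Suc j))" using step[of "Suc j" c] j assms by simp
  then show ?case using IH by simp
qed

lemma M2: assumes "j < i" "i \<le> m" "d c (xs ! j) < d c (xs ! i)" shows "inc c i"
  using dec_ge[of c i j] assms by fastforce

definition cidx where "cidx c = Suc (Max {i. i < length xs \<and> c \<in> B (xs ! i)})"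

lemma in_B: "c \<in> B w \<longleftrightarrow> d w c \<le> k" by (simp add: ball_k_def)
lemma in_S: "c \<in> sphere_k E k w \<longleftrightarrow> d w c = Suc k" by (simp add: sphere_k_def)

lemma CR:
  assumes i0: "i0 \<le> m" and c0: "c \<in> B (xs ! i0)" and cy: "c \<notin> B y"
  shows "i0 < cidx c" "cidx c \<le> m" "inc c (cidx c)" "d c (xs ! cidx c) = Suc k"
    "c \<in> B (xs ! (cidx c - 1))" "\<And>j. cidx c \<le> j \<Longrightarrow> j \<le> m \<Longrightarrow> c \<notin> B (xs ! j)"
proof -
  let ?I = "{i. i < length xs \<and> c \<in> B (xs ! i)}"
  have fin: "finite ?I" by simp
  have i0I: "i0 \<in> ?I" using i0 c0 len_xs by simp
  have mI: "m \<notin> ?I" using cy xsm by simp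
  have le: "Max ?I \<ge> i0" using Max_ge[OF fin i0I] .
  have MI: "Max ?I \<in> ?I" using Max_in[OF fin] i0I by blast
  then have "Max ?I < m" using mI len_xs by (cases "Max ?I = m") auto
  then show lt: "cidx c \<le> m" unfolding cidx_def by simp
  show "i0 < cidx c" using le unfolding cidx_def by simp
  have notin: "cidx c \<notin> ?I" unfolding cidx_def using Max_ge[OF fin] by (metis Suc_n_not_le_n)
  show inB: "c \<in> B (xs ! (cidx c - 1))" using MI unfolding cidx_def by simp
  have a1: "d c (xs ! (cidx c - 1)) \<le> k" using inB d_sym by (simp add: in_B)
  have a2: "\<not> d c (xs ! cidx c) \<le> k" using notin lt len_xs d_sym by (simp add: in_B)
  show inc: "inc c (cidx c)" unfolding inc_def using a1 a2 by simp
  have "0 < cidx c" unfolding cidx_def by simp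
  then have "d c (xs ! cidx c) = Suc (d c (xs ! (cidx c - 1)))" using step[of "cidx c" c] lt inc by auto
  then show dk: "d c (xs ! cidx c) = Suc k" using a1 a2 by simp
  fix j assume "cidx c \<le> j" "j \<le> m"
  then have "d c (xs ! j) = d c (xs ! cidx c) + (j - cidx c)"
    using inc_after[OF inc \<open>0 < cidx c\<close>] by blast
  then show "c \<notin> B (xs ! j)" using dk d_sym by (simp add: in_B)
qed

lemma CR2:
  assumes "i' < i" "i \<le> m" "c \<in> B (xs ! i')" "d (xs ! i) c = Suc k"
  shows "cidx c = i"
proof -
  let ?I = "{i. i < length xs \<and> c \<in> B (xs ! i)}"
  have a: "d c (xs ! i') < d c (xs ! i)" using assms d_sym by (simp add: in_B)
  have inc: "inc c i" using M2[OF assms(1,2) a] .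
  have "0 < i" using assms by simp
  have "d c (xs ! i) = Suc (d c (xs ! (i - 1)))" using step[of i c] assms inc by auto
  then have "i - 1 \<in> ?I" using assms len_xs d_sym by (simp add: in_B)
  moreover have "\<And>j. j \<in> ?I \<Longrightarrow> j \<le> i - 1"
  proof (rule ccontr)
    fix j assume j: "j \<in> ?I" "\<not> j \<le> i - 1"
    then have "d c (xs ! j) = d c (xs ! i) + (j - i)"
      using inc_after[OF inc \<open>0 < i\<close>, of j] len_xs by simp
    then show False using j assms d_sym by (simp add: in_B) linarith
  qed
  ultimately have "Max ?I = i - 1" by (intro Max_eqI) auto
  then show ?thesis unfolding cidx_def using \<open>0 < i\<close> by simp
qed

lemma SEP:
  assumes "0 < i" "i \<le> m" "inc u i" "u \<notin> B (xs ! i)" "d u v \<le> k"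
  shows "v \<in> B (xs ! i) \<and> d u (xs ! i) \<le> d u v + d v (xs ! i) \<or> inc v i"
proof (rule ccontr)
  assume h: "\<not> ?thesis"
  then have "\<not> inc v i" by blast
  then have "d v (xs ! i) < d v (xs ! (i - 1))" using step[OF assms(1,2), of v] by auto
  moreover have e: "E (xs ! (i - 1)) (xs ! i)" using xs_edge[of "i - 1"] assms by simp
  ultimately have "d u (xs ! i) + d (xs ! i) v \<le> d u v" using cut[OF e] assms(3) unfolding inc_def by blast
  then show False using assms(4,5) d_sym by (simp add: in_B)
qed

lemma FAR: assumes "0 < i" "i \<le> m" "inc v i" "v \<notin> B (xs ! i)" shows "v \<notin> B y"
proof -
  have "d v (xs ! m) = d v (xs ! i) + (m - i)" using inc_after[OF assms(3,1), of m] assms by simp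
  then show ?thesis using assms(4) xsm d_sym by (simp add: in_B)
qed

end


locale walks = tree E for E :: "'a \<Rightarrow> 'a \<Rightarrow> bool" +
  fixes p :: "'a \<Rightarrow> 'a \<Rightarrow> real" and k :: nat
  assumes bv: "bounded_valence E" and pnn: "\<forall>u v. p u v \<ge> 0"
    and pst: "\<forall>u. (p u has_sum 1) UNIV" and rk: "\<forall>u v. gdist E u v > k \<longrightarrow> p u v = 0"
begin

definition S where "S a = {v. p a v \<noteq> 0}"
definition wt where "wt n ws = (\<Prod>i<n. p (ws ! i) (ws ! Suc i))"
definition W where "W n a = {ws. length ws = Suc n \<and> ws ! 0 = a \<and> (\<forall>i<n. p (ws ! i) (ws ! Suc i) \<noteq> 0)}"

lemma S_d: assumes "v \<in> S a" shows "d a v \<le> k"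
proof (rule ccontr)
  assume "\<not> d a v \<le> k"
  then have "p a v = 0" using rk by simp
  then show False using assms by (simp add: S_def)
qed

lemma S_fin: "finite (S a)"
proof -
  have "S a \<subseteq> {v. d a v \<le> k}" using S_d by blast
  then show ?thesis using finite_ball[OF bv] finite_subset by blast
qed

lemma S_sum: "(\<Sum>v\<in>S a. p a v) = 1"
proof -
  have "infsum (p a) UNIV = 1" using pst by (simp add: infsumI)
  moreover have "infsum (p a) UNIV = infsum (p a) (S a)"
    by (rule infsum_cong_neutral) (auto simp: S_def)
  ultimately show ?thesis using infsum_finite[OF S_fin[of a], of "p a"] by simp
qed

lemma W0: "W 0 a = {[a]}"
  unfolding W_def by (auto simp: length_Suc_conv)

lemma W_Suc: "W (Suc n) a = (\<lambda>(v, ws). a # ws) ` (SIGMA v:S a. W n v)"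
proof
  show "W (Suc n) a \<subseteq> (\<lambda>(v, ws). a # ws) ` (SIGMA v:S a. W n v)"
  proof
    fix ws assume ws: "ws \<in> W (Suc n) a"
    then obtain u ws' where ws': "ws = u # ws'" unfolding W_def by (cases ws) auto
    have u: "u = a" using ws ws' unfolding W_def by simp
    have "length ws' = Suc n" using ws ws' unfolding W_def by simp
    then have h0: "ws' ! 0 = ws ! 1" using ws' by simp
    have "p a (ws' ! 0) \<noteq> 0" using ws ws' u unfolding W_def by force
    then have "ws' ! 0 \<in> S a" unfolding S_def by simp
    moreover have "ws' \<in> W n (ws' ! 0)" using ws ws' unfolding W_def by force
    ultimately show "ws \<in> (\<lambda>(v, ws). a # ws) ` (SIGMA v:S a. W n v)"
      using ws' u by (intro image_eqI[of _ _ "(ws' ! 0, ws')"]) auto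
  qed
next
  show "(\<lambda>(v, ws). a # ws) ` (SIGMA v:S a. W n v) \<subseteq> W (Suc n) a"
  proof clarify
    fix v ws assume v: "v \<in> S a" and ws: "ws \<in> W n v"
    have "\<forall>i<Suc n. p ((a # ws) ! i) ((a # ws) ! Suc i) \<noteq> 0"
    proof (intro allI impI)
      fix i assume "i < Suc n"
      then show "p ((a # ws) ! i) ((a # ws) ! Suc i) \<noteq> 0"
        using v ws unfolding S_def W_def by (cases i) auto
    qed
    then show "a # ws \<in> W (Suc n) a" using ws unfolding W_def by simp
  qed
qed

lemma W_fin: "finite (W n a)"
proof (induction n arbitrary: a)
  case 0 then show ?case by (simp add: W0)
next
  case (Suc n) then show ?case unfolding W_Suc using S_fin by (intro finite_imageI finite_SigmaI) auto
qed

lemma W_hd: "ws \<in> W n v \<Longrightarrow> ws ! 0 = v" unfolding W_def by simp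
lemma W_len: "ws \<in> W n v \<Longrightarrow> length ws = Suc n" unfolding W_def by simp

lemma GL:
  "(\<Sum>ws\<in>{ws \<in> W (Suc n) a. P ws}. wt (Suc n) ws) =
   (\<Sum>v\<in>S a. p a v * (\<Sum>ws\<in>{ws \<in> W n v. P (a # ws)}. wt n ws))"
proof -
  let ?f = "\<lambda>(v::'a, ws). a # ws"
  let ?A = "SIGMA v:S a. {ws \<in> W n v. P (a # ws)}"
  have eq: "{ws \<in> W (Suc n) a. P ws} = ?f ` ?A"
    unfolding W_Suc by auto
  have inj: "inj_on ?f ?A"
    by (rule inj_onI) (auto dest: W_hd)
  have "(\<Sum>ws\<in>{ws \<in> W (Suc n) a. P ws}. wt (Suc n) ws) = (\<Sum>x\<in>?A. wt (Suc n) (?f x))"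
    unfolding eq by (rule sum.reindex[OF inj, unfolded comp_def])
  also have "\<dots> = (\<Sum>(v, ws)\<in>?A. p a v * wt n ws)"
  proof (rule sum.cong[OF refl], clarify)
    fix v ws assume "v \<in> S a" "ws \<in> W n v" "P (a # ws)"
    then show "wt (Suc n) (a # ws) = p a v * wt n ws"
      by (simp only: wt_def prod.lessThan_Suc_shift) (simp add: W_hd)
  qed
  also have "\<dots> = (\<Sum>v\<in>S a. \<Sum>ws\<in>{ws \<in> W n v. P (a # ws)}. p a v * wt n ws)"
    by (rule sum.Sigma[symmetric]) (use S_fin W_fin in auto)
  also have "\<dots> = (\<Sum>v\<in>S a. p a v * (\<Sum>ws\<in>{ws \<in> W n v. P (a # ws)}. wt n ws))"
    by (simp add: sum_distrib_left)
  finally show ?thesis .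
qed

definition PW where "PW \<Omega> n a c = {ws \<in> W n a. ws ! n = c \<and> (\<forall>i. 0 < i \<and> i < n \<longrightarrow> ws ! i \<in> \<Omega>)}"

lemma pres_fin: "pres p \<Omega> n a c = (\<Sum>ws\<in>PW \<Omega> n a c. wt n ws)"
proof -
  let ?PS = "{ws. length ws = Suc n \<and> ws ! 0 = a \<and> ws ! n = c \<and> (\<forall>i. 0 < i \<and> i < n \<longrightarrow> ws ! i \<in> \<Omega>)}"
  have "pres p \<Omega> n a c = infsum (wt n) ?PS" unfolding pres_def wt_def by simp
  also have "\<dots> = infsum (wt n) (PW \<Omega> n a c)"
  proof (rule infsum_cong_neutral)
    fix ws assume "ws \<in> ?PS - PW \<Omega> n a c"
    then obtain i where "i < n" "p (ws ! i) (ws ! Suc i) = 0" unfolding PW_def W_def by auto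
    then show "wt n ws = 0" unfolding wt_def by (intro prod_zero) auto
  qed (auto simp: PW_def W_def)
  also have "\<dots> = (\<Sum>ws\<in>PW \<Omega> n a c. wt n ws)"
    by (rule infsum_finite) (use W_fin in \<open>auto simp: PW_def\<close>)
  finally show ?thesis .
qed

lemma wt_nn: "0 \<le> wt n ws" unfolding wt_def using pnn by (simp add: prod_nonneg)

lemma pres_nn: "0 \<le> pres p \<Omega> n a c" unfolding pres_fin using wt_nn by (simp add: sum_nonneg)

lemma tot: "(\<Sum>ws\<in>W n a. wt n ws) = 1"
proof (induction n arbitrary: a)
  case 0 then show ?case by (simp add: W0 wt_def)
next
  case (Suc n)
  have "(\<Sum>ws\<in>W (Suc n) a. wt (Suc n) ws) = (\<Sum>ws\<in>{ws \<in> W (Suc n) a. True}. wt (Suc n) ws)" by simp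
  also have "\<dots> = (\<Sum>v\<in>S a. p a v * (\<Sum>ws\<in>{ws \<in> W n v. True}. wt n ws))" by (rule GL)
  also have "\<dots> = 1" using Suc S_sum by simp
  finally show ?case .
qed

lemma pres_le1: "pres p \<Omega> n a c \<le> 1"
proof -
  have "pres p \<Omega> n a c \<le> (\<Sum>ws\<in>W n a. wt n ws)" unfolding pres_fin
    by (rule sum_mono2[OF W_fin]) (auto simp: PW_def wt_nn)
  then show ?thesis using tot by simp
qed

lemma pres0: "pres p \<Omega> 0 a c = (if a = c then 1 else 0)"
proof -
  have "PW \<Omega> 0 a c = (if a = c then {[a]} else {})" unfolding PW_def W0 by auto
  then show ?thesis unfolding pres_fin by (simp add: wt_def)
qed

definition st where "st \<Omega> n v c = (if n = 0 then (if v = c then 1 else 0) else if v \<in> \<Omega> then pres p \<Omega> n v c else 0)"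

lemma pres_Suc: "pres p \<Omega> (Suc n) a c = (\<Sum>v\<in>S a. p a v * st \<Omega> n v c)"
proof -
  have "pres p \<Omega> (Suc n) a c = (\<Sum>ws\<in>{ws \<in> W (Suc n) a. ws ! Suc n = c \<and> (\<forall>i. 0 < i \<and> i < Suc n \<longrightarrow> ws ! i \<in> \<Omega>)}. wt (Suc n) ws)"
    unfolding pres_fin PW_def by simp
  also have "\<dots> = (\<Sum>v\<in>S a. p a v * (\<Sum>ws\<in>{ws \<in> W n v. (a # ws) ! Suc n = c \<and> (\<forall>i. 0 < i \<and> i < Suc n \<longrightarrow> (a # ws) ! i \<in> \<Omega>)}. wt n ws))"
    by (rule GL)
  also have "\<dots> = (\<Sum>v\<in>S a. p a v * st \<Omega> n v c)"
  proof (rule sum.cong[OF refl])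
    fix v assume "v \<in> S a"
    have "{ws \<in> W n v. (a # ws) ! Suc n = c \<and> (\<forall>i. 0 < i \<and> i < Suc n \<longrightarrow> (a # ws) ! i \<in> \<Omega>)}
        = {ws \<in> W n v. ws ! n = c \<and> (\<forall>j<n. ws ! j \<in> \<Omega>)}"
    proof -
      have "(\<forall>i. 0 < i \<and> i < Suc n \<longrightarrow> (a # ws) ! i \<in> \<Omega>) \<longleftrightarrow> (\<forall>j<n. ws ! j \<in> \<Omega>)" for ws
      proof
        assume h: "\<forall>i. 0 < i \<and> i < Suc n \<longrightarrow> (a # ws) ! i \<in> \<Omega>"
        show "\<forall>j<n. ws ! j \<in> \<Omega>"
        proof (intro allI impI)
          fix j assume "j < n" then show "ws ! j \<in> \<Omega>" using h[rule_format, of "Suc j"] by simp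
        qed
      next
        assume h: "\<forall>j<n. ws ! j \<in> \<Omega>"
        show "\<forall>i. 0 < i \<and> i < Suc n \<longrightarrow> (a # ws) ! i \<in> \<Omega>"
        proof (intro allI impI)
          fix i assume "0 < i \<and> i < Suc n" then show "(a # ws) ! i \<in> \<Omega>" using h by (cases i) auto
        qed
      qed
      then show ?thesis by simp
    qed
    also have "(\<Sum>ws\<in>{ws \<in> W n v. ws ! n = c \<and> (\<forall>j<n. ws ! j \<in> \<Omega>)}. wt n ws) = st \<Omega> n v c"
    proof (cases "n = 0")
      case True
      have "{ws \<in> W n v. ws ! n = c \<and> (\<forall>j<n. ws ! j \<in> \<Omega>)} = (if v = c then {[v]} else {})"
        using True by (auto simp: W0)
      then show ?thesis using True by (simp add: st_def wt_def)
    next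
      case False
      show ?thesis
      proof (cases "v \<in> \<Omega>")
        case True
        have "{ws \<in> W n v. ws ! n = c \<and> (\<forall>j<n. ws ! j \<in> \<Omega>)} = PW \<Omega> n v c"
          unfolding PW_def using True False by (auto dest: W_hd) (metis W_hd bot_nat_0.not_eq_extremum)
        then show ?thesis using True False by (simp add: st_def pres_fin)
      next
        case nv: False
        have emp: "{ws \<in> W n v. ws ! n = c \<and> (\<forall>j<n. ws ! j \<in> \<Omega>)} = {}"
          using nv False by (auto dest!: W_hd)
        show ?thesis unfolding emp using nv False by (simp add: st_def)
      qed
    qed
    finally show "p a v * (\<Sum>ws\<in>{ws \<in> W n v. (a # ws) ! Suc n = c \<and> (\<forall>i. 0 < i \<and> i < Suc n \<longrightarrow> (a # ws) ! i \<in> \<Omega>)}. wt n ws) = p a v * st \<Omega> n v c"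
      by simp
  qed
  finally show ?thesis .
qed

end


context walks begin
lemma st_in: "v \<in> \<Omega> \<Longrightarrow> st \<Omega> n v c = pres p \<Omega> n v c"
  by (simp add: st_def pres0)
lemma st_out: "v \<notin> \<Omega> \<Longrightarrow> st \<Omega> n v c = (if n = 0 \<and> v = c then 1 else 0)"
  by (simp add: st_def)
end

locale main = walks E p k + geo E xs x y k for E p k xs x y
begin

lemma FP:
  assumes i1: "0 < i1" "i1 \<le> m" and b: "b \<in> B y"
  shows "a \<notin> B (xs ! i1) \<Longrightarrow> inc a i1 \<Longrightarrow>
    pres p (- B y) n a b = (if b \<in> B (xs ! i1) then pres p (- B (xs ! i1)) n a b else 0) +
      (\<Sum>c\<in>B (xs ! i1) - B y. \<Sum>t\<le>n. pres p (- B (xs ! i1)) t a c * pres p (- B y) (n - t) c b)"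
proof (induction n arbitrary: a)
  case 0
  have "a \<notin> B y" using FAR[OF i1 0(2,1)] .
  then have "a \<noteq> b" using b by auto
  moreover have "\<And>c. c \<in> B (xs ! i1) - B y \<Longrightarrow> a \<noteq> c" using 0 by auto
  ultimately show ?case by (simp add: pres0)
next
  case (Suc n)
  let ?O = "- B (xs ! i1)" and ?O' = "- B y" and ?C = "B (xs ! i1) - B y"
  have finC: "finite ?C" using finite_ball[OF bv] by (simp add: ball_k_def)
  have key: "st ?O' n v b = (if b \<in> B (xs ! i1) then st ?O n v b else 0) +
      (\<Sum>c\<in>?C. \<Sum>t\<le>n. st ?O t v c * pres p ?O' (n - t) c b)" if v: "v \<in> S a" for v
  proof (cases "v \<in> B (xs ! i1)")
    case True
    have inner: "(\<Sum>t\<le>n. st ?O t v c * pres p ?O' (n - t) c b) = (if v = c then pres p ?O' n c b else 0)" for c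
    proof -
      have "(\<Sum>t\<le>n. st ?O t v c * pres p ?O' (n - t) c b) = (\<Sum>t\<le>n. if t = 0 then (if v = c then pres p ?O' n c b else 0) else 0)"
        by (rule sum.cong[OF refl]) (use True in \<open>simp add: st_out\<close>)
      also have "\<dots> = (if v = c then pres p ?O' n c b else 0)" by (simp add: sum.delta)
      finally show ?thesis .
    qed
    have "(\<Sum>c\<in>?C. \<Sum>t\<le>n. st ?O t v c * pres p ?O' (n - t) c b) = (if v \<in> ?C then pres p ?O' n v b else 0)"
      unfolding inner using finC by (simp add: sum.delta')
    moreover have "st ?O n v b = (if n = 0 \<and> v = b then 1 else 0)" using True by (simp add: st_out)
    ultimately show ?thesis
    proof (cases "v \<in> B y")
      case vy: True
      then show ?thesis using \<open>_ = (if v \<in> ?C then _ else 0)\<close> \<open>st ?O n v b = _\<close> True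
        by (auto simp: st_out)
    next
      case vy: False
      then have "v \<noteq> b" using b by auto
      then show ?thesis using \<open>_ = (if v \<in> ?C then _ else 0)\<close> \<open>st ?O n v b = _\<close> True vy
        by (simp add: st_in pres0)
    qed
  next
    case False
    have "d a v \<le> k" using S_d[OF v] .
    then have incv: "inc v i1" using SEP[OF i1 Suc.prems(2,1)] False by blast
    have vy: "v \<notin> B y" using FAR[OF i1 incv False] .
    have "st ?O t v c = pres p ?O t v c" for t c using False by (simp add: st_in)
    moreover have "st ?O' n v b = pres p ?O' n v b" using vy by (simp add: st_in)
    ultimately show ?thesis using Suc.IH[OF False incv] by simp
  qed
  have "pres p ?O' (Suc n) a b = (\<Sum>v\<in>S a. p a v * st ?O' n v b)" by (rule pres_Suc)
  also have "\<dots> = (\<Sum>v\<in>S a. p a v * ((if b \<in> B (xs ! i1) then st ?O n v b else 0) +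
      (\<Sum>c\<in>?C. \<Sum>t\<le>n. st ?O t v c * pres p ?O' (n - t) c b)))"
    using key by simp
  also have "\<dots> = (if b \<in> B (xs ! i1) then (\<Sum>v\<in>S a. p a v * st ?O n v b) else 0) +
      (\<Sum>v\<in>S a. \<Sum>c\<in>?C. \<Sum>t\<le>n. p a v * st ?O t v c * pres p ?O' (n - t) c b)"
    by (simp add: distrib_left sum.distrib sum_distrib_left mult.assoc)
  also have "(\<Sum>v\<in>S a. \<Sum>c\<in>?C. \<Sum>t\<le>n. p a v * st ?O t v c * pres p ?O' (n - t) c b)
      = (\<Sum>c\<in>?C. \<Sum>t\<le>n. \<Sum>v\<in>S a. p a v * st ?O t v c * pres p ?O' (n - t) c b)"
    by (subst sum.swap) (subst (2) sum.swap, rule refl)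
  also have "\<dots> = (\<Sum>c\<in>?C. \<Sum>t\<le>n. pres p ?O (Suc t) a c * pres p ?O' (Suc n - Suc t) c b)"
    by (simp add: pres_Suc sum_distrib_right)
  also have "\<dots> = (\<Sum>c\<in>?C. \<Sum>t\<le>Suc n. pres p ?O t a c * pres p ?O' (Suc n - t) c b)"
  proof (rule sum.cong[OF refl])
    fix c assume c: "c \<in> ?C"
    have "pres p ?O 0 a c = 0" using c Suc.prems by (auto simp: pres0)
    then show "(\<Sum>t\<le>n. pres p ?O (Suc t) a c * pres p ?O' (Suc n - Suc t) c b) =
        (\<Sum>t\<le>Suc n. pres p ?O t a c * pres p ?O' (Suc n - t) c b)"
      by (simp only: sum.atMost_Suc_shift)
  qed
  finally show ?case by (simp add: pres_Suc)
qed

end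


context walks begin

lemma gabs: assumes "norm z < 1"
  shows "summable (\<lambda>n. norm (complex_of_real (pres p \<Omega> n a c) * z ^ n))"
proof (rule summable_comparison_test)
  show "\<exists>N. \<forall>n\<ge>N. norm (norm (complex_of_real (pres p \<Omega> n a c) * z ^ n)) \<le> norm z ^ n"
  proof (intro exI allI impI)
    fix n :: nat
    have "norm (norm (complex_of_real (pres p \<Omega> n a c) * z ^ n)) = pres p \<Omega> n a c * norm z ^ n"
      using pres_nn by (simp add: norm_mult norm_power)
    also have "\<dots> \<le> 1 * norm z ^ n" using pres_le1 by (intro mult_right_mono) auto
    finally show "norm (norm (complex_of_real (pres p \<Omega> n a c) * z ^ n)) \<le> norm z ^ n" by simp
  qed
  show "summable (\<lambda>n. norm z ^ n)" using assms by (simp add: summable_geometric)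
qed

lemma gsum: "norm z < 1 \<Longrightarrow> summable (\<lambda>n. complex_of_real (pres p \<Omega> n a c) * z ^ n)"
  by (rule summable_norm_cancel[OF gabs])

end

context main begin

lemma GR:
  assumes i1: "0 < i1" "i1 \<le> m" and b: "b \<in> B y" and a: "a \<notin> B (xs ! i1)" "inc a i1"
    and z: "norm z < 1"
  shows "green p z a b (- B y) = (if b \<in> B (xs ! i1) then green p z a b (- B (xs ! i1)) else 0) +
      (\<Sum>c\<in>B (xs ! i1) - B y. green p z a c (- B (xs ! i1)) * green p z c b (- B y))"
proof -
  let ?O = "- B (xs ! i1)" and ?O' = "- B y" and ?C = "B (xs ! i1) - B y"
  define f where "f c t = complex_of_real (pres p ?O t a c) * z ^ t" for c t
  define g where "g c t = complex_of_real (pres p ?O' t c b) * z ^ t" for c t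
  define h0 where "h0 n = (if b \<in> B (xs ! i1) then complex_of_real (pres p ?O n a b) * z ^ n else 0)" for n
  have trm: "complex_of_real (pres p ?O' n a b) * z ^ n = h0 n + (\<Sum>c\<in>?C. \<Sum>t\<le>n. f c t * g c (n - t))" for n
  proof -
    have "complex_of_real (pres p ?O' n a b) * z ^ n =
       h0 n + (\<Sum>c\<in>?C. \<Sum>t\<le>n. complex_of_real (pres p ?O t a c * pres p ?O' (n - t) c b) * z ^ n)"
      unfolding FP[OF i1 b a, of n] h0_def
      by (simp add: distrib_right sum_distrib_right)
    also have "(\<Sum>c\<in>?C. \<Sum>t\<le>n. complex_of_real (pres p ?O t a c * pres p ?O' (n - t) c b) * z ^ n)
        = (\<Sum>c\<in>?C. \<Sum>t\<le>n. f c t * g c (n - t))"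
    proof (intro sum.cong refl)
      fix c t assume "t \<in> {..n}"
      then have "z ^ n = z ^ t * z ^ (n - t)" by (simp add: power_add[symmetric])
      then show "complex_of_real (pres p ?O t a c * pres p ?O' (n - t) c b) * z ^ n = f c t * g c (n - t)"
        unfolding f_def g_def by simp
    qed
    finally show ?thesis .
  qed
  have sf: "summable (\<lambda>t. norm (f c t))" for c unfolding f_def using gabs[OF z] .
  have sg: "summable (\<lambda>t. norm (g c t))" for c unfolding g_def using gabs[OF z] .
  have sh0: "summable h0" unfolding h0_def using gsum[OF z] by (cases "b \<in> B (xs ! i1)") auto
  have sC: "summable (\<lambda>n. \<Sum>t\<le>n. f c t * g c (n - t))" for c
    using summable_Cauchy_product[OF sf sg] summable_norm_cancel by blast
  have "green p z a b ?O' = (\<Sum>n. h0 n + (\<Sum>c\<in>?C. \<Sum>t\<le>n. f c t * g c (n - t)))"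
    unfolding green_def trm by simp
  also have "\<dots> = suminf h0 + (\<Sum>n. \<Sum>c\<in>?C. \<Sum>t\<le>n. f c t * g c (n - t))"
    by (rule suminf_add[symmetric]) (use sh0 sC in \<open>auto intro: summable_sum\<close>)
  also have "(\<Sum>n. \<Sum>c\<in>?C. \<Sum>t\<le>n. f c t * g c (n - t)) = (\<Sum>c\<in>?C. \<Sum>n. \<Sum>t\<le>n. f c t * g c (n - t))"
    by (rule suminf_sum) (use sC in auto)
  also have "\<dots> = (\<Sum>c\<in>?C. green p z a c ?O * green p z c b ?O')"
  proof (rule sum.cong[OF refl])
    fix c
    have "(\<Sum>n. \<Sum>t\<le>n. f c t * g c (n - t)) = (\<Sum>t. f c t) * (\<Sum>t. g c t)"
      by (rule Cauchy_product[OF sf sg, symmetric])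
    then show "(\<Sum>n. \<Sum>t\<le>n. f c t * g c (n - t)) = green p z a c ?O * green p z c b ?O'"
      unfolding green_def f_def g_def by simp
  qed
  also have "suminf h0 = (if b \<in> B (xs ! i1) then green p z a b ?O else 0)"
    unfolding h0_def green_def by simp
  finally show ?thesis .
qed

end


context walks begin
lemma green_zero: assumes "\<forall>n. \<not> pres p \<Omega> n a c > 0" shows "green p z a c \<Omega> = 0"
proof -
  have "pres p \<Omega> n a c = 0" for n
  proof -
    have "\<not> pres p \<Omega> n a c > 0" using assms by blast
    then show ?thesis using pres_nn[of \<Omega> n a c] by linarith
  qed
  then show ?thesis unfolding green_def by simp
qed
end

context main begin

definition Xg where "Xg b c = {cs. 2 \<le> length cs \<and> cs ! 0 = c \<and> last cs = b \<and>
   (\<forall>j. Suc j < length cs \<longrightarrow> (cs ! j, cs ! Suc j) \<in> Xi_w E k p (xs ! cidx (cs ! j)) \<and> cs ! j \<notin> B y)}"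

definition Pr where "Pr z cs = (\<Prod>j\<in>{1..length cs - 1}. green p z (cs ! (j - 1)) (cs ! j) (- B (xs ! cidx (cs ! (j - 1)))))"

lemma Pr_Cons: assumes "cs \<noteq> []"
  shows "Pr z (c # cs) = green p z c (cs ! 0) (- B (xs ! cidx c)) * Pr z cs"
proof -
  let ?f = "\<lambda>j. green p z ((c # cs) ! (j - 1)) ((c # cs) ! j) (- B (xs ! cidx ((c # cs) ! (j - 1))))"
  have "Pr z (c # cs) = prod ?f {1..length cs}" unfolding Pr_def by simp
  also have "\<dots> = ?f 1 * prod ?f {Suc 1..length cs}"
    using assms by (intro prod.atLeast_Suc_atMost) (simp add: Suc_le_eq)
  also have "prod ?f {Suc 1..length cs} = prod (\<lambda>j. ?f (Suc j)) {1..length cs - 1}"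
    using assms prod.shift_bounds_cl_Suc_ivl[of ?f 1 "length cs - 1"] by simp
  also have "\<dots> = Pr z cs" unfolding Pr_def
    by (intro prod.cong refl) auto
  finally show ?thesis by simp
qed

lemma Xi_w_iff: "c \<in> sphere_k E k w \<Longrightarrow> c' \<in> B w \<Longrightarrow>
   (c, c') \<in> Xi_w E k p w \<longleftrightarrow> (\<exists>n. pres p (- B w) n c c' > 0)"
  unfolding Xi_w_def by simp

lemma Xg_split:
  "Xg b c = (if (c, b) \<in> Xi_w E k p (xs ! cidx c) \<and> c \<notin> B y then {[c, b]} else {}) \<union>
     (\<Union>c'\<in>{c' \<in> B (xs ! cidx c) - B y. (c, c') \<in> Xi_w E k p (xs ! cidx c) \<and> c \<notin> B y}. (\<lambda>cs. c # cs) ` Xg b c')"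
  (is "_ = ?A \<union> ?U")
proof
  show "Xg b c \<subseteq> ?A \<union> ?U"
  proof
    fix cs assume cs: "cs \<in> Xg b c"
    have l2: "2 \<le> length cs" and h0: "cs ! 0 = c" using cs unfolding Xg_def by auto
    then obtain cs' where cs': "cs = c # cs'" "cs' \<noteq> []"
      by (cases cs) (auto simp: numeral_2_eq_2 Suc_le_eq)
    have P: "\<And>j. Suc j < length cs \<Longrightarrow> (cs ! j, cs ! Suc j) \<in> Xi_w E k p (xs ! cidx (cs ! j)) \<and> cs ! j \<notin> B y"
      using cs unfolding Xg_def by blast
    have P0: "(c, cs' ! 0) \<in> Xi_w E k p (xs ! cidx c)" "c \<notin> B y" using P[of 0] cs' by auto
    show "cs \<in> ?A \<union> ?U"
    proof (cases "length cs' = 1")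
      case True
      then have "cs' = [b]" using cs cs' unfolding Xg_def by (cases cs') auto
      then show ?thesis using P0 cs' by simp
    next
      case False
      moreover have "length cs' \<noteq> 0" using cs'(2) by simp
      ultimately have l: "2 \<le> length cs'" by linarith
      have "cs' ! 0 \<notin> B y" using P[of 1] l cs' by simp
      moreover have "cs' ! 0 \<in> B (xs ! cidx c)" using P0 unfolding Xi_w_def by simp
      moreover have "cs' \<in> Xg b (cs' ! 0)"
        unfolding Xg_def using l cs cs' P[of "Suc _"] by (auto simp: Xg_def)
      ultimately show ?thesis using P0 cs' by blast
    qed
  qed
next
  show "?A \<union> ?U \<subseteq> Xg b c"
  proof
    fix cs assume "cs \<in> ?A \<union> ?U"
    then consider "cs = [c, b]" "(c, b) \<in> Xi_w E k p (xs ! cidx c)" "c \<notin> B y"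
      | c' cs' where "cs = c # cs'" "cs' \<in> Xg b c'" "(c, c') \<in> Xi_w E k p (xs ! cidx c)" "c \<notin> B y"
      by (auto split: if_splits)
    then show "cs \<in> Xg b c"
    proof cases
      case 1 then show ?thesis unfolding Xg_def by (auto simp: less_Suc_eq)
    next
      case 2
      have cs': "2 \<le> length cs'" "cs' ! 0 = c'" "last cs' = b"
        "\<And>j. Suc j < length cs' \<Longrightarrow> (cs' ! j, cs' ! Suc j) \<in> Xi_w E k p (xs ! cidx (cs' ! j)) \<and> cs' ! j \<notin> B y"
        using 2 unfolding Xg_def by auto
      have "\<forall>j. Suc j < length cs \<longrightarrow> (cs ! j, cs ! Suc j) \<in> Xi_w E k p (xs ! cidx (cs ! j)) \<and> cs ! j \<notin> B y"
      proof (intro allI impI)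
        fix j assume "Suc j < length cs"
        then show "(cs ! j, cs ! Suc j) \<in> Xi_w E k p (xs ! cidx (cs ! j)) \<and> cs ! j \<notin> B y"
          using 2 cs' by (cases j) auto
      qed
      then show ?thesis unfolding Xg_def using 2 cs' by auto
    qed
  qed
qed

lemma MC:
  assumes b: "b \<in> B y" and z: "norm z < 1"
  shows "i0 \<le> m \<Longrightarrow> c \<in> B (xs ! i0) \<Longrightarrow> c \<notin> B y \<Longrightarrow>
     finite (Xg b c) \<and> green p z c b (- B y) = (\<Sum>cs\<in>Xg b c. Pr z cs)"
proof (induction "m - cidx c" arbitrary: c i0 rule: less_induct)
  case less
  let ?i = "cidx c"
  have cr: "i0 < ?i" "?i \<le> m" "inc c ?i" "d c (xs ! ?i) = Suc k"
    using CR(1-4)[OF less.prems] by auto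
  have cnot: "c \<notin> B (xs ! ?i)" using CR(6)[OF less.prems, of ?i] cr by simp
  have csph: "c \<in> sphere_k E k (xs ! ?i)" using cr d_sym by (simp add: in_S)
  let ?O = "- B (xs ! ?i)" and ?O' = "- B y" and ?C = "B (xs ! ?i) - B y"
  define C' where "C' = {c' \<in> ?C. (c, c') \<in> Xi_w E k p (xs ! ?i) \<and> c \<notin> B y}"
  have finC: "finite ?C" using finite_ball[OF bv] by (simp add: ball_k_def)
  have finC': "finite C'" unfolding C'_def by (rule finite_subset[OF _ finC]) auto
  have IH: "finite (Xg b c') \<and> green p z c' b ?O' = (\<Sum>cs\<in>Xg b c'. Pr z cs)" if c': "c' \<in> ?C" for c'
  proof -
    have c'1: "c' \<in> B (xs ! ?i)" and c'2: "c' \<notin> B y" using c' by auto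
    have "?i < cidx c'" by (rule CR(1)[OF cr(2) c'1 c'2])
    moreover have "cidx c' \<le> m" by (rule CR(2)[OF cr(2) c'1 c'2])
    ultimately have "m - cidx c' < m - cidx c" by simp
    from less.hyps[OF this cr(2) c'1 c'2] show ?thesis .
  qed
  have split: "Xg b c = (if (c, b) \<in> Xi_w E k p (xs ! ?i) then {[c, b]} else {}) \<union> (\<Union>c'\<in>C'. (\<lambda>cs. c # cs) ` Xg b c')"
    using Xg_split[of b c] less.prems unfolding C'_def by simp
  have finU: "finite (\<Union>c'\<in>C'. (\<lambda>cs. c # cs) ` Xg b c')"
    using finC' IH unfolding C'_def by auto
  have fin: "finite (Xg b c)" unfolding split using finU by simp
  have disj: "(if (c, b) \<in> Xi_w E k p (xs ! ?i) then {[c, b]} else {}) \<inter> (\<Union>c'\<in>C'. (\<lambda>cs. c # cs) ` Xg b c') = {}"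
  proof -
    have "\<And>cs. cs \<in> Xg b c' \<Longrightarrow> c # cs \<noteq> [c, b]" for c'
    proof -
      fix cs assume "cs \<in> Xg b c'"
      then have "2 \<le> length cs" unfolding Xg_def by simp
      then show "c # cs \<noteq> [c, b]" by auto
    qed
    then show ?thesis by auto
  qed
  have sumU: "(\<Sum>cs\<in>(\<Union>c'\<in>C'. (\<lambda>cs. c # cs) ` Xg b c'). Pr z cs) =
      (\<Sum>c'\<in>C'. green p z c c' ?O * green p z c' b ?O')"
  proof -
    have "(\<Sum>cs\<in>(\<Union>c'\<in>C'. (\<lambda>cs. c # cs) ` Xg b c'). Pr z cs) = (\<Sum>c'\<in>C'. \<Sum>cs\<in>(\<lambda>cs. c # cs) ` Xg b c'. Pr z cs)"
    proof (rule sum.UNION_disjoint[OF finC'])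
      show "\<forall>c'\<in>C'. finite ((\<lambda>cs. c # cs) ` Xg b c')" using IH unfolding C'_def by auto
      show "\<forall>c1\<in>C'. \<forall>c2\<in>C'. c1 \<noteq> c2 \<longrightarrow> (\<lambda>cs. c # cs) ` Xg b c1 \<inter> (\<lambda>cs. c # cs) ` Xg b c2 = {}"
        unfolding Xg_def by auto
    qed
    also have "\<dots> = (\<Sum>c'\<in>C'. green p z c c' ?O * green p z c' b ?O')"
    proof (rule sum.cong[OF refl])
      fix c' assume c': "c' \<in> C'"
      have "(\<Sum>cs\<in>(\<lambda>cs. c # cs) ` Xg b c'. Pr z cs) = (\<Sum>cs\<in>Xg b c'. Pr z (c # cs))"
        by (rule sum.reindex_cong[of "\<lambda>cs. c # cs"]) (auto simp: inj_on_def)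
      also have "\<dots> = (\<Sum>cs\<in>Xg b c'. green p z c c' ?O * Pr z cs)"
      proof (rule sum.cong[OF refl])
        fix cs assume "cs \<in> Xg b c'"
        then have "cs \<noteq> []" "cs ! 0 = c'" unfolding Xg_def by auto
        then show "Pr z (c # cs) = green p z c c' ?O * Pr z cs" by (simp add: Pr_Cons)
      qed
      also have "\<dots> = green p z c c' ?O * green p z c' b ?O'"
        using IH[of c'] c' unfolding C'_def by (simp add: sum_distrib_left)
      finally show "(\<Sum>cs\<in>(\<lambda>cs. c # cs) ` Xg b c'. Pr z cs) = green p z c c' ?O * green p z c' b ?O'" .
    qed
    finally show ?thesis .
  qed
  have gr: "green p z c b ?O' = (if b \<in> B (xs ! ?i) then green p z c b ?O else 0) +
      (\<Sum>c'\<in>?C. green p z c c' ?O * green p z c' b ?O')"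
    using GR[OF _ cr(2) b cnot cr(3) z] cr by simp
  have t1: "(if b \<in> B (xs ! ?i) then green p z c b ?O else 0) =
      (if (c, b) \<in> Xi_w E k p (xs ! ?i) then green p z c b ?O else 0)"
  proof (cases "b \<in> B (xs ! ?i)")
    case True
    show ?thesis
    proof (cases "(c, b) \<in> Xi_w E k p (xs ! ?i)")
      case False
      then have "\<forall>n. \<not> pres p ?O n c b > 0" using Xi_w_iff[OF csph True] by simp
      then show ?thesis using green_zero by simp
    qed (use True in simp)
  next
    case False then show ?thesis unfolding Xi_w_def by auto
  qed
  have t2: "(\<Sum>c'\<in>?C. green p z c c' ?O * green p z c' b ?O') = (\<Sum>c'\<in>C'. green p z c c' ?O * green p z c' b ?O')"
  proof (rule sum.mono_neutral_right[OF finC])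
    show "C' \<subseteq> ?C" unfolding C'_def by auto
    show "\<forall>c'\<in>?C - C'. green p z c c' ?O * green p z c' b ?O' = 0"
    proof
      fix c' assume c': "c' \<in> ?C - C'"
      then have "(c, c') \<notin> Xi_w E k p (xs ! ?i)" unfolding C'_def using less.prems by auto
      then have "\<forall>n. \<not> pres p ?O n c c' > 0" using Xi_w_iff[OF csph] c' by auto
      then show "green p z c c' ?O * green p z c' b ?O' = 0" using green_zero by simp
    qed
  qed
  have "(\<Sum>cs\<in>Xg b c. Pr z cs) = (if (c, b) \<in> Xi_w E k p (xs ! ?i) then Pr z [c, b] else 0) +
      (\<Sum>cs\<in>(\<Union>c'\<in>C'. (\<lambda>cs. c # cs) ` Xg b c'). Pr z cs)"
    unfolding split by (subst sum.union_disjoint) (use finU disj in auto)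
  also have "Pr z [c, b] = green p z c b ?O" by (simp add: Pr_def)
  finally have "(\<Sum>cs\<in>Xg b c. Pr z cs) = green p z c b ?O'"
    using gr t1 t2 sumU by simp
  then show ?case using fin by simp
qed

end


lemma chain_mono:
  fixes f :: "nat \<Rightarrow> nat"
  assumes "\<And>j. Suc j < l \<Longrightarrow> f j < f (Suc j)"
  shows "i < j \<Longrightarrow> j < l \<Longrightarrow> f i < f j"
proof (induction j)
  case 0 then show ?case by simp
next
  case (Suc j)
  then show ?case using assms[of j] by (cases "i = j") auto
qed

context main begin

lemma cross_cidx: "cross_idx E k xs cs j = cidx (cs ! (j - 1))"
  by (simp add: cross_idx_def cidx_def)

lemma XE:
  assumes a: "a \<in> B x" "a \<notin> B y" and b: "b \<in> B y"
  shows "{cs \<in> Xi_geo E k p xs. cs ! 0 = a \<and> cs ! (length cs - 1) = b} = Xg b a"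
proof
  show "{cs \<in> Xi_geo E k p xs. cs ! 0 = a \<and> cs ! (length cs - 1) = b} \<subseteq> Xg b a"
  proof
    fix cs assume "cs \<in> {cs \<in> Xi_geo E k p xs. cs ! 0 = a \<and> cs ! (length cs - 1) = b}"
    then have cs: "cs \<in> Xi_geo E k p xs" and c0: "cs ! 0 = a" and cl: "cs ! (length cs - 1) = b" by auto
    define l where "l = length cs - 1"
    have H: "0 < l \<and> l \<le> m \<and> (\<exists>ix. length ix = l \<and> sorted_wrt (<) ix \<and> 0 < ix ! 0 \<and> ix ! (l - 1) \<le> m \<and>
        cs ! 0 \<in> B (xs ! 0) \<inter> sphere_k E k (xs ! (ix ! 0)) \<and>
        (\<forall>j. 1 \<le> j \<and> j \<le> l - 1 \<longrightarrow> cs ! j \<in> B (xs ! (ix ! (j - 1))) \<inter> sphere_k E k (xs ! (ix ! j))) \<and>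
        cs ! l \<in> B (xs ! (ix ! (l - 1))) \<inter> B (xs ! m) \<and>
        (\<forall>j. 1 \<le> j \<and> j \<le> l \<longrightarrow> (cs ! (j - 1), cs ! j) \<in> Xi_w E k p (xs ! (ix ! (j - 1)))))"
      using cs unfolding Xi_geo_def Let_def l_def m_def by simp
    then obtain ix where l: "0 < l" "l \<le> m" and ix: "length ix = l" "sorted_wrt (<) ix" "0 < ix ! 0" "ix ! (l - 1) \<le> m"
      and i0: "cs ! 0 \<in> B (xs ! 0) \<inter> sphere_k E k (xs ! (ix ! 0))"
      and ij': "\<forall>j. 1 \<le> j \<and> j \<le> l - 1 \<longrightarrow> cs ! j \<in> B (xs ! (ix ! (j - 1))) \<inter> sphere_k E k (xs ! (ix ! j))"
      and il: "cs ! l \<in> B (xs ! (ix ! (l - 1))) \<inter> B (xs ! m)"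
      and xw': "\<forall>j. 1 \<le> j \<and> j \<le> l \<longrightarrow> (cs ! (j - 1), cs ! j) \<in> Xi_w E k p (xs ! (ix ! (j - 1)))"
      by blast
    have ij: "\<And>j. 1 \<le> j \<Longrightarrow> j \<le> l - 1 \<Longrightarrow> cs ! j \<in> B (xs ! (ix ! (j - 1))) \<inter> sphere_k E k (xs ! (ix ! j))"
      using ij' by blast
    have xw: "\<And>j. 1 \<le> j \<Longrightarrow> j \<le> l \<Longrightarrow> (cs ! (j - 1), cs ! j) \<in> Xi_w E k p (xs ! (ix ! (j - 1)))"
      using xw' by blast
    have lc: "length cs = Suc l" using l unfolding l_def by simp
    have srt: "\<And>i j. i < j \<Longrightarrow> j < l \<Longrightarrow> ix ! i < ix ! j"
      using ix(1,2) by (simp add: sorted_wrt_iff_nth_less)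
    have ism: "\<And>j. j < l \<Longrightarrow> ix ! j \<le> m"
    proof -
      fix j assume j: "j < l"
      show "ix ! j \<le> m"
      proof (cases "j = l - 1")
        case True then show ?thesis using ix by simp
      next
        case False
        then have "j < l - 1" using j by simp
        then have "ix ! j < ix ! (l - 1)" using srt[of j "l - 1"] j by simp
        then show ?thesis using ix by simp
      qed
    qed
    have info: "cs ! j \<in> B (xs ! (if j = 0 then 0 else ix ! (j - 1))) \<and> d (xs ! (ix ! j)) (cs ! j) = Suc k
       \<and> (if j = 0 then 0 else ix ! (j - 1)) < ix ! j" if j: "j < l" for j
    proof (cases j)
      case 0 then show ?thesis using i0 ix by (simp add: in_S)
    next
      case (Suc j')
      then show ?thesis using ij[of j] j srt[of j' j] by (simp add: in_S)
    qed
    have cid: "cidx (cs ! j) = ix ! j" if j: "j < l" for j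
      using CR2[of "if j = 0 then 0 else ix ! (j - 1)" "ix ! j" "cs ! j"] info[OF j] ism[OF j] by blast
    have noty: "cs ! j \<notin> B y" if j: "j < l" for j
    proof -
      let ?i' = "if j = 0 then 0 else ix ! (j - 1)"
      have "d (cs ! j) (xs ! ?i') < d (cs ! j) (xs ! (ix ! j))"
        using info[OF j] d_sym by (simp add: in_B)
      then have "inc (cs ! j) (ix ! j)" using M2 info[OF j] ism[OF j] by blast
      moreover have "cs ! j \<notin> B (xs ! (ix ! j))" using info[OF j] d_sym by (simp add: in_B)
      moreover have "0 < ix ! j" using info[OF j] by linarith
      ultimately show ?thesis using FAR ism[OF j] by blast
    qed
    have A: "\<forall>j. Suc j < length cs \<longrightarrow> (cs ! j, cs ! Suc j) \<in> Xi_w E k p (xs ! cidx (cs ! j)) \<and> cs ! j \<notin> B y"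
    proof (intro allI impI)
      fix j assume "Suc j < length cs"
      then have j: "j < l" using lc by simp
      have "(cs ! j, cs ! Suc j) \<in> Xi_w E k p (xs ! cidx (cs ! j))"
        using xw[of "Suc j"] j cid[OF j] by simp
      then show "(cs ! j, cs ! Suc j) \<in> Xi_w E k p (xs ! cidx (cs ! j)) \<and> cs ! j \<notin> B y"
        using noty[OF j] by simp
    qed
    have "last cs = b" using cl lc by (subst last_conv_nth) auto
    then show "cs \<in> Xg b a" unfolding Xg_def using A lc l c0 by simp
  qed
next
  show "Xg b a \<subseteq> {cs \<in> Xi_geo E k p xs. cs ! 0 = a \<and> cs ! (length cs - 1) = b}"
  proof
    fix cs assume cs: "cs \<in> Xg b a"
    define l where "l = length cs - 1"
    have lc: "length cs = Suc l" "0 < l" using cs unfolding Xg_def l_def by auto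
    have c0: "cs ! 0 = a" and clast: "last cs = b" using cs unfolding Xg_def by auto
    have P: "\<And>j. j < l \<Longrightarrow> (cs ! j, cs ! Suc j) \<in> Xi_w E k p (xs ! cidx (cs ! j)) \<and> cs ! j \<notin> B y"
      using cs lc unfolding Xg_def by auto
    have G: "\<exists>i0\<le>m. cs ! j \<in> B (xs ! i0)" if "j < l" for j
      using that
    proof (induction j)
      case 0 then show ?case using a c0 xs0 by auto
    next
      case (Suc j)
      then obtain i0 where "i0 \<le> m" "cs ! j \<in> B (xs ! i0)" by auto
      then have "cidx (cs ! j) \<le> m" using CR(2)[of i0 "cs ! j"] P[of j] Suc by auto
      moreover have "cs ! Suc j \<in> B (xs ! cidx (cs ! j))" using P[of j] Suc unfolding Xi_w_def by auto
      ultimately show ?case by blast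
    qed
    have CRj: "cidx (cs ! j) \<le> m \<and> d (cs ! j) (xs ! cidx (cs ! j)) = Suc k" if j: "j < l" for j
    proof -
      obtain i0 where "i0 \<le> m" "cs ! j \<in> B (xs ! i0)" using G[OF j] by auto
      then show ?thesis using CR(2,4)[of i0 "cs ! j"] P[OF j] by auto
    qed
    have step: "cidx (cs ! j) < cidx (cs ! Suc j)" if j: "Suc j < l" for j
    proof -
      have "cs ! Suc j \<in> B (xs ! cidx (cs ! j))" using P[of j] j unfolding Xi_w_def by auto
      then show ?thesis using CR(1)[of "cidx (cs ! j)" "cs ! Suc j"] CRj[of j] P[OF j] j by auto
    qed
    define ix where "ix = map (\<lambda>j. cidx (cs ! j)) [0..<l]"
    have isn: "\<And>j. j < l \<Longrightarrow> ix ! j = cidx (cs ! j)" unfolding ix_def by simp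
    have isl: "length ix = l" unfolding ix_def by simp
    have mono: "\<And>i j. i < j \<Longrightarrow> j < l \<Longrightarrow> ix ! i < ix ! j"
      using chain_mono[of l "\<lambda>j. cidx (cs ! j)"] step isn by simp
    have ge: "j < l \<Longrightarrow> Suc j \<le> ix ! j" for j
    proof (induction j)
      case 0 then show ?case using isn by (simp add: cidx_def)
    next
      case (Suc j) then show ?case using mono[of j "Suc j"] by simp
    qed
    have lm: "ix ! (l - 1) \<le> m" using isn CRj lc by simp
    have "l \<le> m" using ge[of "l - 1"] lm lc by simp
    have "cs \<in> Xi_geo E k p xs"
      unfolding Xi_geo_def Let_def m_def[symmetric] l_def[symmetric] mem_Collect_eq
    proof (intro conjI exI[of _ ix])
      show "0 < l" "l \<le> m" by fact+
      show "length ix = l" by (rule isl)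
      show "sorted_wrt (<) ix" using mono isl by (simp add: sorted_wrt_iff_nth_less)
      show "0 < ix ! 0" using isn lc by (simp add: cidx_def)
      show "ix ! (l - 1) \<le> m" by (rule lm)
      show "cs ! 0 \<in> B (xs ! 0) \<inter> sphere_k E k (xs ! (ix ! 0))"
        using a c0 xs0 CRj[of 0] isn[of 0] lc d_sym by (simp add: in_S)
      show "\<forall>j. 1 \<le> j \<and> j \<le> l - 1 \<longrightarrow> cs ! j \<in> B (xs ! (ix ! (j - 1))) \<inter> sphere_k E k (xs ! (ix ! j))"
      proof (intro allI impI)
        fix j assume j: "1 \<le> j \<and> j \<le> l - 1"
        have jl: "j < l" "j - 1 < l" using j lc by linarith+
        have "cs ! j \<in> B (xs ! cidx (cs ! (j - 1)))" using P[of "j - 1"] j lc unfolding Xi_w_def by auto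
        moreover have "d (cs ! j) (xs ! cidx (cs ! j)) = Suc k" using CRj[OF jl(1)] by simp
        ultimately show "cs ! j \<in> B (xs ! (ix ! (j - 1))) \<inter> sphere_k E k (xs ! (ix ! j))"
          using isn[OF jl(1)] isn[OF jl(2)] d_sym by (simp add: in_S)
      qed
      have "cs \<noteq> []" using lc by auto
      then have "last cs = cs ! l" using lc by (simp add: last_conv_nth)
      then have "cs ! l = b" using clast by simp
      moreover have "cs ! l \<in> B (xs ! cidx (cs ! (l - 1)))" using P[of "l - 1"] lc unfolding Xi_w_def by auto
      ultimately show "cs ! l \<in> B (xs ! (ix ! (l - 1))) \<inter> B (xs ! m)"
        using isn[of "l - 1"] lc b xsm by simp
      show "\<forall>j. 1 \<le> j \<and> j \<le> l \<longrightarrow> (cs ! (j - 1), cs ! j) \<in> Xi_w E k p (xs ! (ix ! (j - 1)))"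
      proof (intro allI impI)
        fix j assume j: "1 \<le> j \<and> j \<le> l"
        show "(cs ! (j - 1), cs ! j) \<in> Xi_w E k p (xs ! (ix ! (j - 1)))"
        proof -
          have jl: "j - 1 < l" using j by linarith
          have "Suc (j - 1) = j" using j by simp
          then show ?thesis using P[OF jl] isn[OF jl] by simp
        qed
      qed
    qed
    then show "cs \<in> {cs \<in> Xi_geo E k p xs. cs ! 0 = a \<and> cs ! (length cs - 1) = b}"
    proof -
      have "cs \<noteq> []" using lc by auto
      then have "last cs = cs ! l" using lc by (simp add: last_conv_nth)
      then show ?thesis using c0 clast lc \<open>cs \<in> Xi_geo E k p xs\<close> by simp
    qed
  qed
qed

end

theorem proposition3p22:
  fixes E :: "'a \<Rightarrow> 'a \<Rightarrow> bool" and p :: "'a \<Rightarrow> 'a \<Rightarrow> real" and k :: nat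
    and x y a b :: 'a and xs :: "'a list"
  assumes tree: "is_tree E" and bv: "bounded_valence E"
    and p_nonneg: "\<forall>u v. p u v \<ge> 0"
    and p_stoch: "\<forall>u. (p u has_sum 1) UNIV"
    and irred: "\<forall>u v. \<exists>n. pres p UNIV n u v > 0"
    and range_k: "\<forall>u v. gdist E u v > k \<longrightarrow> p u v = 0"
    and xy: "x \<noteq> y"
    and geo: "is_geodesic E x y xs"
    and a: "a \<in> ball_k E k x - ball_k E k y"
    and b: "b \<in> ball_k E k y"
  shows "finite {cs \<in> Xi_geo E k p xs. cs ! 0 = a \<and> cs ! (length cs - 1) = b} \<and>
    (\<exists>r>0. \<forall>z::complex. norm z < r \<longrightarrow>
      green p z a b (- ball_k E k y) =
      (\<Sum>cs \<in> {cs \<in> Xi_geo E k p xs. cs ! 0 = a \<and> cs ! (length cs - 1) = b}.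
         \<Prod>j \<in> {1..length cs - 1}.
           green p z (cs ! (j - 1)) (cs ! j) (- ball_k E k (xs ! cross_idx E k xs cs j))))"
proof -
  interpret main E p k xs x y
    by unfold_locales (use tree bv p_nonneg p_stoch range_k geo in auto)
  have XE': "{cs \<in> Xi_geo E k p xs. cs ! 0 = a \<and> cs ! (length cs - 1) = b} = Xg b a"
    using XE a b by blast
  have a0: "a \<in> B (xs ! 0)" "a \<notin> B y" using a xs0 by auto
  have "finite (Xg b a)" using MC[OF b, of "0::complex" 0 a] a0 by auto
  moreover have "\<forall>z::complex. norm z < 1 \<longrightarrow>
      green p z a b (- ball_k E k y) =
      (\<Sum>cs \<in> Xg b a. \<Prod>j \<in> {1..length cs - 1}.
           green p z (cs ! (j - 1)) (cs ! j) (- ball_k E k (xs ! cross_idx E k xs cs j)))"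
  proof (intro allI impI)
    fix z :: complex assume z: "norm z < 1"
    have "green p z a b (- B y) = (\<Sum>cs\<in>Xg b a. Pr z cs)" using MC[OF b z, of 0 a] a0 by auto
    then show "green p z a b (- ball_k E k y) =
      (\<Sum>cs \<in> Xg b a. \<Prod>j \<in> {1..length cs - 1}.
           green p z (cs ! (j - 1)) (cs ! j) (- ball_k E k (xs ! cross_idx E k xs cs j)))"
      unfolding Pr_def cross_cidx by simp
  qed
  ultimately show ?thesis unfolding XE' by (intro conjI exI[of _ 1]) auto
qed


end
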